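(* Let $X$ be a pointed manifold and let $(F,\nu_F)$, $(G,\nu_G)$ be topological spaces with strictly associative right topological module structures over $\Omega X$. Let $\{\varphi_{n+1}:I^n\times F\times(\Omega X)^n\to G\}_{n\ge0}$ be an $\mathcal{A}_\infty$-morphism of topological modules. Then the maps $\phi_{n+1}:C_*(F)\otimes C_*(\Omega X)^{\otimes n}\to C_*(G)$ of degree $n$ defined by $\phi_{n+1}(\alpha\otimes\gamma_1\otimes\cdots\otimes\gamma_n)=\varphi_{n+1,*}(\mathrm{Id}_{I^n}\otimes\alpha\otimes\gamma_1\otimes\cdots\otimes\gamma_n)$ form a morphism of $\mathcal{A}_\infty$-modules $\boldsymbol\phi:(C_*(F),\partial,\nu_{F,*})\to(C_*(G),\partial,\nu_{G,*})$ over $C_*(\Omega X)$.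
   Context: $I=[0,1]$, $\Omega X$ Moore loops based at the basepoint with concatenation $\cdot$, $C_*$ normalized cubical chains, $\mathrm{Id}_{I^n}$ the identity cube as an $n$-chain, chain-level maps via the cubical cross product. $C_*(\Omega X)$ is an $\mathcal{A}_\infty$-algebra with $\mu_1$ the differential, $\mu_2$ Pontryagin product, $\mu_i=0$ for $i\ge3$; $C_*(F)$ is a DG (hence $\mathcal{A}_\infty$) module with $\nu_1=\partial$, $\nu_2=\nu_{F,*}$, $\nu_k=0$ for $k\ge3$, similarly for $G$. An $\mathcal{A}_\infty$-morphism of topological modules is a family $\varphi_{n+1}:I^n\times F\times(\Omega X)^n\to G$, $n\ge0$, such that $\varphi_{n+1}(t_1,\dots,t_n,\alpha,\gamma_1,\dots,\gamma_n)$ equals $\varphi_n(t_2,\dots,t_n,\nu_F(\alpha,\gamma_1),\gamma_2,\dots,\gamma_n)$ if $t_1=1$; equals $\varphi_n(t_1,\dots,\widehat{t_j},\dots,t_n,\alpha,\gamma_1,\dots,\gamma_{j-1}\cdot\gamma_j,\dots,\gamma_n)$ if $t_j=1$, $j\ge2$; equals $\nu_G(\varphi_j(t_1,\dots,t_{j-1},\alpha,\gamma_1,\dots,\gamma_{j-1}),\gamma_j\cdot\ldots\cdot\gamma_n)$ if $t_j=0$. A morphism of $\mathcal{A}_\infty$-modules $\boldsymbol\phi:(\mathcal{A},\nu^A)\to(\mathcal{B},\nu^B)$ is a family $\phi_n:\mathcal{A}\otimes C_*(\Omega X)^{\otimes n-1}\to\mathcal{B}$ of degree $n-1$ satisfying,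 for all $N\ge1$, $\sum_{s+t=N}(-1)^{st}\phi_{t+1}(\nu^A_s\otimes1^{\otimes t})+\sum_{r+s+t=N,r\ge1}(-1)^{r+st}\phi_{r+t+1}(1^{\otimes r}\otimes\mu_s\otimes1^{\otimes t})=\sum_{s+t=N}(-1)^{(s+1)t}\nu^B_{t+1}(\phi_s\otimes1^{\otimes t})$ (Koszul signs). *)

theory Defs
  imports "HOL-Homology.Homology" "HOL-Analysis.Abstract_Topological_Spaces"
begin

definition topological_manifold :: "'a topology \<Rightarrow> bool" where
  "topological_manifold X \<longleftrightarrow> Hausdorff_space X \<and> second_countable X \<and>
     (\<exists>n. \<forall>x\<in>topspace X. \<exists>U V. openin X U \<and> x \<in> U \<and> openin (Euclidean_space n) V \<and>
            subtopology X U homeomorphic_space subtopology (Euclidean_space n) V)"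

definition compact_open :: "'a topology \<Rightarrow> 'b topology \<Rightarrow> ('a \<Rightarrow> 'b) topology" where
  "compact_open S Y = topology_generated_by
      {{f. f ` K \<subseteq> U} | K U. compactin S K \<and> openin Y U}"

text \<open>A Moore loop is a pair (r, g) with r \<ge> 0 and g a path of length r; g is extended
  by the basepoint outside [0, r].\<close>
type_synonym 'a loop = "real \<times> (real \<Rightarrow> 'a)"

definition moore_loops :: "'a topology \<Rightarrow> 'a \<Rightarrow> 'a loop set" where
  "moore_loops X x0 = {(r, g). 0 \<le> r \<and> continuous_map euclideanreal X g \<and>
      (\<forall>t. t \<le> 0 \<longrightarrow> g t = x0) \<and> (\<forall>t. r \<le> t \<longrightarrow> g t = x0)}"

definition Omega_top :: "'a topology \<Rightarrow> 'a \<Rightarrow> 'a loop topology" where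
  "Omega_top X x0 = subtopology (prod_topology euclideanreal (compact_open euclideanreal X))
                                (moore_loops X x0)"

definition loop_concat :: "'a loop \<Rightarrow> 'a loop \<Rightarrow> 'a loop" where
  "loop_concat p q = (fst p + fst q, \<lambda>t. if t \<le> fst p then snd p t else snd q (t - fst p))"

definition const_loop :: "'a \<Rightarrow> 'a loop" where
  "const_loop x0 = (0, \<lambda>t. x0)"

text \<open>Iterated product g_1 \<cdot> ... \<cdot> g_k of a nonempty list (concatenation is strictly associative).\<close>
fun loop_prod :: "'a loop list \<Rightarrow> 'a loop" where
  "loop_prod [] = undefined"
| "loop_prod [g] = g"
| "loop_prod (g # gs) = loop_concat g (loop_prod gs)"

definition Omega_pow :: "'a topology \<Rightarrow> 'a \<Rightarrow> nat \<Rightarrow> (nat \<Rightarrow> 'a loop) topology" where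
  "Omega_pow X x0 n = product_topology (\<lambda>i. Omega_top X x0) {..<n}"

definition right_top_module :: "'a topology \<Rightarrow> 'a \<Rightarrow> 'f topology \<Rightarrow> ('f \<Rightarrow> 'a loop \<Rightarrow> 'f) \<Rightarrow> bool" where
  "right_top_module X x0 F nu \<longleftrightarrow>
     continuous_map (prod_topology F (Omega_top X x0)) F (\<lambda>(a, g). nu a g) \<and>
     (\<forall>a\<in>topspace F. \<forall>g\<in>moore_loops X x0. \<forall>h\<in>moore_loops X x0.
          nu (nu a g) h = nu a (loop_concat g h)) \<and>
     (\<forall>a\<in>topspace F. nu a (const_loop x0) = a)"

definition unit_cube :: "nat \<Rightarrow> (nat \<Rightarrow> real) set" where
  "unit_cube n = {x. (\<forall>i<n. 0 \<le> x i \<and> x i \<le> 1) \<and> (\<forall>i\<ge>n. x i = 0)}"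

definition cube_top :: "nat \<Rightarrow> (nat \<Rightarrow> real) topology" where
  "cube_top n = subtopology (powertop_real UNIV) (unit_cube n)"

text \<open>Coordinates t_1..t_n are stored at indices 0..n-1.\<close>
definition del_coord :: "nat \<Rightarrow> (nat \<Rightarrow> real) \<Rightarrow> (nat \<Rightarrow> real)" where
  "del_coord j t = (\<lambda>i. if i < j then t i else t (Suc i))"

definition trunc_coord :: "nat \<Rightarrow> (nat \<Rightarrow> real) \<Rightarrow> (nat \<Rightarrow> real)" where
  "trunc_coord j t = (\<lambda>i. if i < j then t i else 0)"

text \<open>phi n is \<phi>_{n+1} : I^n \<times> F \<times> (\<Omega>X)^n \<rightarrow> G.  Index k (0-based) corresponds to t_{k+1}, \<gamma>_{k+1}.\<close>
definition top_ainf_morphism ::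
  "'a topology \<Rightarrow> 'a \<Rightarrow> 'f topology \<Rightarrow> ('f \<Rightarrow> 'a loop \<Rightarrow> 'f) \<Rightarrow> 'g topology \<Rightarrow> ('g \<Rightarrow> 'a loop \<Rightarrow> 'g)
   \<Rightarrow> (nat \<Rightarrow> (nat \<Rightarrow> real) \<Rightarrow> 'f \<Rightarrow> (nat \<Rightarrow> 'a loop) \<Rightarrow> 'g) \<Rightarrow> bool" where
  "top_ainf_morphism X x0 F nuF G nuG phi \<longleftrightarrow>
    (\<forall>n. continuous_map (prod_topology (cube_top n) (prod_topology F (Omega_pow X x0 n))) G
            (\<lambda>(t, a, gs). phi n t a gs)) \<and>
    (\<forall>n\<ge>1. \<forall>t\<in>unit_cube n. \<forall>a\<in>topspace F. \<forall>gs\<in>topspace (Omega_pow X x0 n).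
       (t 0 = 1 \<longrightarrow> phi n t a gs =
           phi (n - 1) (del_coord 0 t) (nuF a (gs 0))
               (restrict (\<lambda>i. gs (Suc i)) {..<n - 1})) \<and>
       (\<forall>k. 1 \<le> k \<and> k < n \<and> t k = 1 \<longrightarrow> phi n t a gs =
           phi (n - 1) (del_coord k t) a
               (restrict (\<lambda>i. if i < k - 1 then gs i
                               else if i = k - 1 then loop_concat (gs (k - 1)) (gs k)
                               else gs (Suc i)) {..<n - 1})) \<and>
       (\<forall>k<n. t k = 0 \<longrightarrow> phi n t a gs =
           nuG (phi k (trunc_coord k t) a (restrict gs {..<k}))
               (loop_prod (map gs [k..<n]))))"

text \<open>A cube is a pair (n, \<sigma>) with \<sigma> : I^n \<rightarrow> Y, extensional on I^n.\<close>
type_synonym 'a cube = "nat \<times> ((nat \<Rightarrow> real) \<Rightarrow> 'a)"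

definition singular_cube :: "'a topology \<Rightarrow> 'a cube \<Rightarrow> bool" where
  "singular_cube Y c \<longleftrightarrow> continuous_map (cube_top (fst c)) Y (snd c) \<and>
                         snd c \<in> extensional (unit_cube (fst c))"

definition degenerate_cube :: "'a cube \<Rightarrow> bool" where
  "degenerate_cube c \<longleftrightarrow> (\<exists>j<fst c. \<forall>x\<in>unit_cube (fst c). snd c x = snd c (x(j := 0)))"

definition nondeg_cubes :: "'a topology \<Rightarrow> 'a cube set" where
  "nondeg_cubes Y = {c. singular_cube Y c \<and> \<not> degenerate_cube c}"

text \<open>Chains are finitely supported integer combinations of cubes; normalized chains are represented
  by chains supported on nondegenerate cubes, the projection killing degenerate cubes being nd.\<close>
definition nd :: "('a cube \<Rightarrow>\<^sub>0 int) \<Rightarrow> ('a cube \<Rightarrow>\<^sub>0 int)" where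
  "nd c = frag_extend (\<lambda>s. if degenerate_cube s then 0 else frag_of s) c"

definition coord_ins :: "nat \<Rightarrow> real \<Rightarrow> (nat \<Rightarrow> real) \<Rightarrow> (nat \<Rightarrow> real)" where
  "coord_ins j e x = (\<lambda>i. if i < j then x i else if i = j then e else x (i - 1))"

definition cube_face :: "nat \<Rightarrow> real \<Rightarrow> 'a cube \<Rightarrow> 'a cube" where
  "cube_face j e c = (fst c - 1, restrict (\<lambda>x. snd c (coord_ins j e x)) (unit_cube (fst c - 1)))"

definition cube_boundary :: "'a cube \<Rightarrow> ('a cube \<Rightarrow>\<^sub>0 int)" where
  "cube_boundary c = nd (\<Sum>j<fst c. frag_cmul ((-1) ^ (Suc j))
                           (frag_of (cube_face j 0 c) - frag_of (cube_face j 1 c)))"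

definition seg :: "nat \<Rightarrow> nat \<Rightarrow> (nat \<Rightarrow> real) \<Rightarrow> (nat \<Rightarrow> real)" where
  "seg k m x = (\<lambda>i. if i < m then x (k + i) else 0)"

definition cube_cross :: "'a cube \<Rightarrow> 'b cube \<Rightarrow> ('a \<times> 'b) cube" where
  "cube_cross c d = (fst c + fst d,
      restrict (\<lambda>x. (snd c (seg 0 (fst c) x), snd d (seg (fst c) (fst d) x))) (unit_cube (fst c + fst d)))"

definition cube_tuple :: "'a cube list \<Rightarrow> (nat \<Rightarrow> 'a) cube" where
  "cube_tuple cs = (sum_list (map fst cs),
      restrict (\<lambda>x. restrict (\<lambda>i. snd (cs ! i) (seg (sum_list (map fst (take i cs))) (fst (cs ! i)) x))
                             {..<length cs})
               (unit_cube (sum_list (map fst cs))))"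

definition id_cube :: "nat \<Rightarrow> (nat \<Rightarrow> real) cube" where
  "id_cube n = (n, restrict (\<lambda>x. x) (unit_cube n))"

definition cube_push :: "('a \<Rightarrow> 'b) \<Rightarrow> 'a cube \<Rightarrow> 'b cube" where
  "cube_push f c = (fst c, restrict (\<lambda>x. f (snd c x)) (unit_cube (fst c)))"

text \<open>All graded abelian groups are free on given bases BA, BB, BC with degree functions.
  Operations are given on basis tensors (a \<otimes> c_1 \<otimes> ... \<otimes> c_k) as (a, [c_1,...,c_k]) and extended
  linearly.  mu s acts on lists of length s, nuA s on (a, list of length s-1), phi n on
  (a, list of length n-1).  The Koszul sign of 1^{\<otimes>r} \<otimes> \<mu>_s \<otimes> 1^{\<otimes>t} (\<mu>_s of degree s-2) applied
  to a \<otimes> c_1 ... is (-1)^{s (|a| + |c_1| + ... + |c_{r-1}|)}; the other compositions carry no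
  Koszul sign since identities have degree 0.\<close>
definition ainf_module_morphism ::
  "('a \<Rightarrow> nat) \<Rightarrow> ('b \<Rightarrow> nat) \<Rightarrow> ('c \<Rightarrow> nat) \<Rightarrow> 'a set \<Rightarrow> 'c set
   \<Rightarrow> (nat \<Rightarrow> 'c list \<Rightarrow> ('c \<Rightarrow>\<^sub>0 int))
   \<Rightarrow> (nat \<Rightarrow> 'a \<times> 'c list \<Rightarrow> ('a \<Rightarrow>\<^sub>0 int))
   \<Rightarrow> (nat \<Rightarrow> 'b \<times> 'c list \<Rightarrow> ('b \<Rightarrow>\<^sub>0 int))
   \<Rightarrow> (nat \<Rightarrow> 'a \<times> 'c list \<Rightarrow> ('b \<Rightarrow>\<^sub>0 int)) \<Rightarrow> bool" where
  "ainf_module_morphism degA degB degC BA BC mu nuA nuB phi \<longleftrightarrow>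
    (\<forall>n\<ge>1. \<forall>a\<in>BA. \<forall>cs\<in>lists BC. length cs = n - 1 \<longrightarrow>
        (\<forall>b\<in>Poly_Mapping.keys (phi n (a, cs)). degB b = degA a + sum_list (map degC cs) + (n - 1))) \<and>
    (\<forall>N\<ge>1. \<forall>a\<in>BA. \<forall>cs\<in>lists BC. length cs = N - 1 \<longrightarrow>
       (\<Sum>s=1..N. frag_cmul ((-1) ^ (s * (N - s)))
            (frag_extend (\<lambda>a'. phi (N - s + 1) (a', drop (s - 1) cs)) (nuA s (a, take (s - 1) cs))))
     + (\<Sum>r=1..N. \<Sum>s=1..N - r. frag_cmul ((-1) ^ (r + s * (N - r - s))
                                  * (-1) ^ (s * (degA a + sum_list (map degC (take (r - 1) cs)))))
            (frag_extend (\<lambda>c. phi (r + (N - r - s) + 1) (a, take (r - 1) cs @ [c] @ drop (r - 1 + s) cs))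
                         (mu s (take s (drop (r - 1) cs)))))
     = (\<Sum>s=1..N. frag_cmul ((-1) ^ ((s + 1) * (N - s)))
            (frag_extend (\<lambda>b. nuB (N - s + 1) (b, drop (s - 1) cs)) (phi s (a, take (s - 1) cs)))))"

definition chain_mu :: "nat \<Rightarrow> 'a loop cube list \<Rightarrow> ('a loop cube \<Rightarrow>\<^sub>0 int)" where
  "chain_mu s cs =
     (if s = 1 then cube_boundary (cs ! 0)
      else if s = 2 then nd (frag_of (cube_push (\<lambda>(g, h). loop_concat g h) (cube_cross (cs ! 0) (cs ! 1))))
      else 0)"

definition chain_nu :: "('f \<Rightarrow> 'a loop \<Rightarrow> 'f) \<Rightarrow> nat \<Rightarrow> 'f cube \<times> 'a loop cube list \<Rightarrow> ('f cube \<Rightarrow>\<^sub>0 int)" where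
  "chain_nu nu s ac =
     (if s = 1 then cube_boundary (fst ac)
      else if s = 2 then nd (frag_of (cube_push (\<lambda>(a, g). nu a g) (cube_cross (fst ac) (snd ac ! 0))))
      else 0)"

definition chain_phi :: "(nat \<Rightarrow> (nat \<Rightarrow> real) \<Rightarrow> 'f \<Rightarrow> (nat \<Rightarrow> 'a loop) \<Rightarrow> 'g)
     \<Rightarrow> nat \<Rightarrow> 'f cube \<times> 'a loop cube list \<Rightarrow> ('g cube \<Rightarrow>\<^sub>0 int)" where
  "chain_phi phi m ac =
     nd (frag_of (cube_push (\<lambda>(t, a, gs). phi (m - 1) t a gs)
           (cube_cross (id_cube (m - 1)) (cube_cross (fst ac) (cube_tuple (snd ac))))))"

end

theory Submission
  imports Defs
begin


lemma unit_cube_iff: "x \<in> unit_cube n \<longleftrightarrow> (\<forall>i<n. 0 \<le> x i \<and> x i \<le> 1) \<and> (\<forall>i\<ge>n. x i = 0)"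
  by (simp add: unit_cube_def)

lemma unit_cube_bounds: "x \<in> unit_cube M \<Longrightarrow> 0 \<le> x i \<and> x i \<le> 1"
  unfolding unit_cube_iff by (cases "i < M") auto

lemma seg_in: "x \<in> unit_cube M \<Longrightarrow> seg k m x \<in> unit_cube m"
  using unit_cube_bounds[of x M] unfolding unit_cube_iff[of _ m] seg_def by auto

lemma coord_ins_in:
  assumes "x \<in> unit_cube m" "j \<le> m" "0 \<le> e" "e \<le> 1"
  shows "coord_ins j e x \<in> unit_cube (Suc m)"
  unfolding unit_cube_iff[of _ "Suc m"]
proof (intro conjI allI impI)
  fix i assume "i < Suc m"
  then show "0 \<le> coord_ins j e x i" "coord_ins j e x i \<le> 1"
    using assms unit_cube_bounds[of x m] unfolding coord_ins_def by auto
next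
  fix i assume "Suc m \<le> i"
  then show "coord_ins j e x i = 0"
    using assms unfolding unit_cube_iff coord_ins_def by auto
qed

lemma upd0_in: "x \<in> unit_cube n \<Longrightarrow> j < n \<Longrightarrow> x(j := 0) \<in> unit_cube n"
  unfolding unit_cube_iff by auto

lemma nd_of: "nd (frag_of s) = (if degenerate_cube s then 0 else frag_of s)"
  by (simp add: nd_def)
lemma nd_add: "nd (x + y) = nd x + nd y" by (simp add: nd_def frag_extend_add)
lemma nd_diff: "nd (x - y) = nd x - nd y" by (simp add: nd_def frag_extend_diff)
lemma nd_minus: "nd (- x) = - nd x" by (simp add: nd_def frag_extend_minus)
lemma nd_cmul: "nd (frag_cmul k x) = frag_cmul k (nd x)" by (simp add: nd_def frag_extend_cmul)
lemma nd_0: "nd 0 = 0" by (simp add: nd_def)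
lemma nd_sum: "finite I \<Longrightarrow> nd (\<Sum>i\<in>I. g i) = (\<Sum>i\<in>I. nd (g i))"
  by (simp add: nd_def frag_extend_sum o_def)

lemma frag_extend_compose2:
  "frag_extend f (frag_extend g c) = frag_extend (\<lambda>x. frag_extend f (g x)) c"
  using subset_UNIV
  by (induction c rule: frag_induction) (auto simp: frag_extend_diff)

lemma nd_frag_extend: "nd (frag_extend g c) = frag_extend (\<lambda>x. nd (g x)) c"
  unfolding nd_def by (rule frag_extend_compose2)

lemma frag_extend_nd:
  assumes "\<And>s. degenerate_cube s \<Longrightarrow> g s = 0"
  shows "frag_extend g (nd x) = frag_extend g x"
  unfolding nd_def frag_extend_compose2
  by (rule frag_extend_eq) (auto simp: assms)

lemma nd_nd: "nd (nd x) = nd x"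
proof -
  have "frag_extend (\<lambda>s. if degenerate_cube s then 0 else frag_of s) (nd x) =
        frag_extend (\<lambda>s. if degenerate_cube s then 0 else frag_of s) x"
    by (rule frag_extend_nd) simp
  then show ?thesis by (simp add: nd_def)
qed

lemma frag_extend_nd_of:
  assumes "\<And>s. degenerate_cube s \<Longrightarrow> degenerate_cube (G s)"
  shows "frag_extend (\<lambda>s. nd (frag_of (G s))) (nd x) = nd (frag_extend (\<lambda>s. frag_of (G s)) x)"
  by (subst frag_extend_nd) (auto simp: nd_of assms nd_frag_extend)


lemma seg_ci_before: "k + m \<le> J \<Longrightarrow> seg k m (coord_ins J e x) = seg k m x"
  unfolding seg_def coord_ins_def by auto

lemma seg_ci_after: "J < k \<Longrightarrow> seg k m (coord_ins J e x) = seg (k - 1) m x"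
  unfolding seg_def coord_ins_def by (rule ext) auto

lemma seg_ci_inside: "k \<le> J \<Longrightarrow> J < k + m \<Longrightarrow>
   seg k m (coord_ins J e x) = coord_ins (J - k) e (seg k (m - 1) x)"
  unfolding seg_def coord_ins_def by (rule ext) auto

lemma seg_upd_out: "J < k \<or> k + m \<le> J \<Longrightarrow> seg k m (x(J := v)) = seg k m x"
  unfolding seg_def by (rule ext) auto

lemma seg_upd_in: "k \<le> J \<Longrightarrow> J < k + m \<Longrightarrow> seg k m (x(J := v)) = (seg k m x)(J - k := v)"
  unfolding seg_def by (rule ext) auto

abbreviation pfx :: "'b cube list \<Rightarrow> nat \<Rightarrow> nat" where
  "pfx cs i \<equiv> sum_list (map fst (take i cs))"

lemma pfx_Suc: "i < length cs \<Longrightarrow> pfx cs (Suc i) = pfx cs i + fst (cs ! i)"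
  by (simp add: take_Suc_conv_app_nth)

lemma pfx_mono: "i \<le> j \<Longrightarrow> pfx cs i \<le> pfx cs j"
proof -
  assume "i \<le> j"
  then have "take j cs = take i cs @ take (j - i) (drop i cs)"
    using take_add[of i "j - i" cs] by simp
  then show ?thesis by simp
qed

lemma pfx_lt: "i < r \<Longrightarrow> r \<le> length cs \<Longrightarrow> pfx cs i + fst (cs ! i) \<le> pfx cs r"
  using pfx_Suc[where i=i and cs=cs] pfx_mono[where i="Suc i" and j=r and cs=cs] by simp

lemma pfx_le_total: "pfx cs i \<le> sum_list (map fst cs)"
proof -
  have "sum_list (map fst cs) = sum_list (map fst (take i cs)) + sum_list (map fst (drop i cs))"
    by (metis append_take_drop_id map_append sum_list_append)
  then show ?thesis by simp
qed

section \<open>degeneracy preservation\<close>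

lemma degen_push: "degenerate_cube c \<Longrightarrow> degenerate_cube (cube_push f c)"
  unfolding degenerate_cube_def
proof (elim exE conjE)
  fix j assume j: "j < fst c" and h: "\<forall>x\<in>unit_cube (fst c). snd c x = snd c (x(j := 0))"
  show "\<exists>j<fst (cube_push f c). \<forall>x\<in>unit_cube (fst (cube_push f c)).
          snd (cube_push f c) x = snd (cube_push f c) (x(j := 0))"
  proof (intro exI conjI ballI)
    show "j < fst (cube_push f c)" using j by (simp add: cube_push_def)
    fix x assume x: "x \<in> unit_cube (fst (cube_push f c))"
    then have x': "x(j := 0) \<in> unit_cube (fst c)" using j
      by (intro upd0_in) (auto simp: cube_push_def)
    have "snd c x = snd c (x(j := 0))" using h x by (simp add: cube_push_def)
    then show "snd (cube_push f c) x = snd (cube_push f c) (x(j := 0))"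
      using x x' by (simp add: cube_push_def)
  qed
qed

lemma degen_cross_l: "degenerate_cube c \<Longrightarrow> degenerate_cube (cube_cross c d)"
  unfolding degenerate_cube_def
proof (elim exE conjE)
  fix j assume j: "j < fst c" and h: "\<forall>x\<in>unit_cube (fst c). snd c x = snd c (x(j := 0))"
  show "\<exists>j<fst (cube_cross c d). \<forall>x\<in>unit_cube (fst (cube_cross c d)).
          snd (cube_cross c d) x = snd (cube_cross c d) (x(j := 0))"
  proof (intro exI conjI ballI)
    show "j < fst (cube_cross c d)" using j by (simp add: cube_cross_def)
    fix x assume x: "x \<in> unit_cube (fst (cube_cross c d))"
    then have x': "x(j := 0) \<in> unit_cube (fst c + fst d)" using j
      by (intro upd0_in) (auto simp: cube_cross_def)
    have "seg 0 (fst c) (x(j := 0)) = (seg 0 (fst c) x)(j := 0)"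
      using j by (simp add: seg_upd_in)
    moreover have "seg (fst c) (fst d) (x(j := 0)) = seg (fst c) (fst d) x"
      using j by (simp add: seg_upd_out)
    moreover have "seg 0 (fst c) x \<in> unit_cube (fst c)" by (rule seg_in[OF x])
    ultimately show "snd (cube_cross c d) x = snd (cube_cross c d) (x(j := 0))"
      using x x' h[rule_format, of "seg 0 (fst c) x"] by (simp add: cube_cross_def)
  qed
qed

lemma degen_cross_r: "degenerate_cube d \<Longrightarrow> degenerate_cube (cube_cross c d)"
  unfolding degenerate_cube_def
proof (elim exE conjE)
  fix j assume j: "j < fst d" and h: "\<forall>x\<in>unit_cube (fst d). snd d x = snd d (x(j := 0))"
  show "\<exists>j<fst (cube_cross c d). \<forall>x\<in>unit_cube (fst (cube_cross c d)).
          snd (cube_cross c d) x = snd (cube_cross c d) (x(j := 0))"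
  proof (intro exI conjI ballI)
    show "fst c + j < fst (cube_cross c d)" using j by (simp add: cube_cross_def)
    fix x assume x: "x \<in> unit_cube (fst (cube_cross c d))"
    then have x': "x(fst c + j := 0) \<in> unit_cube (fst c + fst d)" using j
      by (intro upd0_in) (auto simp: cube_cross_def)
    have "seg 0 (fst c) (x(fst c + j := 0)) = seg 0 (fst c) x"
      by (simp add: seg_upd_out)
    moreover have "seg (fst c) (fst d) (x(fst c + j := 0)) = (seg (fst c) (fst d) x)(j := 0)"
      using j by (simp add: seg_upd_in)
    moreover have "seg (fst c) (fst d) x \<in> unit_cube (fst d)" by (rule seg_in[OF x])
    ultimately show "snd (cube_cross c d) x = snd (cube_cross c d) (x(fst c + j := 0))"
      using x x' h[rule_format, of "seg (fst c) (fst d) x"] by (simp add: cube_cross_def)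
  qed
qed

lemma degen_tuple:
  assumes r: "r < length cs" and dg: "degenerate_cube (cs ! r)"
  shows "degenerate_cube (cube_tuple cs)"
proof -
  obtain j where j: "j < fst (cs ! r)" and h: "\<forall>x\<in>unit_cube (fst (cs ! r)). snd (cs ! r) x = snd (cs ! r) (x(j := 0))"
    using dg unfolding degenerate_cube_def by blast
  let ?J = "pfx cs r + j"
  have JQ: "?J < sum_list (map fst cs)"
    using pfx_le_total[where cs=cs and i="Suc r"] r j pfx_Suc[OF r] by linarith
  show ?thesis unfolding degenerate_cube_def
  proof (intro exI conjI ballI)
    show "?J < fst (cube_tuple cs)" using JQ by (simp add: cube_tuple_def)
    fix x assume x: "x \<in> unit_cube (fst (cube_tuple cs))"
    then have xQ: "x \<in> unit_cube (sum_list (map fst cs))" by (simp add: cube_tuple_def)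
    then have x': "x(?J := 0) \<in> unit_cube (sum_list (map fst cs))" using JQ by (intro upd0_in)
    have comp: "snd (cs ! i) (seg (pfx cs i) (fst (cs ! i)) x) =
                snd (cs ! i) (seg (pfx cs i) (fst (cs ! i)) (x(?J := 0)))" if i: "i < length cs" for i
    proof (cases "i = r")
      case True
      then show ?thesis using h[rule_format, OF seg_in[OF xQ]] by (simp add: seg_upd_in j)
    next
      case False
      then have "?J < pfx cs i \<or> pfx cs i + fst (cs ! i) \<le> ?J"
      proof (cases "i < r")
        case True
        then show ?thesis using pfx_lt[where i=i and r=r and cs=cs] r by auto
      next
        case False
        with \<open>i \<noteq> r\<close> have "r < i" by auto
        then show ?thesis using pfx_lt[where i=r and r=i and cs=cs] i j by auto
      qed
      then show ?thesis by (simp add: seg_upd_out)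
    qed
    show "snd (cube_tuple cs) x = snd (cube_tuple cs) (x(?J := 0))"
      using xQ x' comp by (auto simp: cube_tuple_def intro!: restrict_ext)
  qed
qed


lemma cube_eqI2:
  assumes "fst c = fst d" "snd c \<in> extensional (unit_cube (fst c))"
    "snd d \<in> extensional (unit_cube (fst d))"
    "\<And>x. x \<in> unit_cube (fst c) \<Longrightarrow> snd c x = snd d x"
  shows "c = d"
  using assms by (simp add: prod_eq_iff extensionalityI)

lemma fst_face[simp]: "fst (cube_face j e c) = fst c - 1" by (simp add: cube_face_def)
lemma fst_cross[simp]: "fst (cube_cross c d) = fst c + fst d" by (simp add: cube_cross_def)
lemma fst_push[simp]: "fst (cube_push f c) = fst c" by (simp add: cube_push_def)
lemma fst_tuple[simp]: "fst (cube_tuple cs) = sum_list (map fst cs)" by (simp add: cube_tuple_def)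
lemma fst_id[simp]: "fst (id_cube n) = n" by (simp add: id_cube_def)
lemma ext_face[simp]: "n = fst c - 1 \<Longrightarrow> snd (cube_face j e c) \<in> extensional (unit_cube n)" by (simp add: cube_face_def)
lemma ext_cross[simp]: "n = fst c + fst d \<Longrightarrow> snd (cube_cross c d) \<in> extensional (unit_cube n)" by (simp add: cube_cross_def)
lemma ext_push[simp]: "n = fst c \<Longrightarrow> snd (cube_push f c) \<in> extensional (unit_cube n)" by (simp add: cube_push_def)
lemma ext_tuple[simp]: "n = sum_list (map fst cs) \<Longrightarrow> snd (cube_tuple cs) \<in> extensional (unit_cube n)" by (simp add: cube_tuple_def)
lemma snd_face: "x \<in> unit_cube (fst c - 1) \<Longrightarrow> snd (cube_face j e c) x = snd c (coord_ins j e x)"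
  by (simp add: cube_face_def)
lemma snd_cross: "x \<in> unit_cube (fst c + fst d) \<Longrightarrow>
   snd (cube_cross c d) x = (snd c (seg 0 (fst c) x), snd d (seg (fst c) (fst d) x))"
  by (simp add: cube_cross_def)
lemma snd_push: "x \<in> unit_cube (fst c) \<Longrightarrow> snd (cube_push f c) x = f (snd c x)"
  by (simp add: cube_push_def)
lemma snd_tuple: "x \<in> unit_cube (sum_list (map fst cs)) \<Longrightarrow>
   snd (cube_tuple cs) x = restrict (\<lambda>i. snd (cs ! i) (seg (pfx cs i) (fst (cs ! i)) x)) {..<length cs}"
  by (simp add: cube_tuple_def)
lemma snd_id: "x \<in> unit_cube n \<Longrightarrow> snd (id_cube n) x = x"
  by (simp add: id_cube_def)

lemma face_push:
  assumes j: "j < fst c" and e: "0 \<le> e" "e \<le> 1"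
  shows "cube_face j e (cube_push f c) = cube_push f (cube_face j e c)"
proof (rule cube_eqI2)
  fix x assume x: "x \<in> unit_cube (fst (cube_face j e (cube_push f c)))"
  obtain m where m: "fst c = Suc m" using j by (cases "fst c") auto
  have ci: "coord_ins j e x \<in> unit_cube (Suc m)"
    using j m e x by (intro coord_ins_in) auto
  show "snd (cube_face j e (cube_push f c)) x = snd (cube_push f (cube_face j e c)) x"
    using x ci m by (simp add: snd_face snd_push)
qed auto

lemma face_cross_l:
  assumes j: "j < fst c" and e: "0 \<le> e" "e \<le> 1"
  shows "cube_face j e (cube_cross c d) = cube_cross (cube_face j e c) d"
proof (rule cube_eqI2)
  obtain m where m: "fst c = Suc m" using j by (cases "fst c") auto
  let ?k = "fst d"
  fix x assume x0: "x \<in> unit_cube (fst (cube_face j e (cube_cross c d)))"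
  then have x: "x \<in> unit_cube (m + ?k)" using m by simp
  have ci: "coord_ins j e x \<in> unit_cube (Suc m + ?k)"
    using j m e coord_ins_in[OF x, of j e] by simp
  have s1: "seg 0 (Suc m) (coord_ins j e x) = coord_ins j e (seg 0 m x)"
    using seg_ci_inside[of 0 j "Suc m" e x] j m by simp
  have s2: "seg (Suc m) ?k (coord_ins j e x) = seg m ?k x"
    using seg_ci_after[of j "Suc m" ?k e x] j m by simp
  have s0: "seg 0 m x \<in> unit_cube m" by (rule seg_in[OF x])
  show "snd (cube_face j e (cube_cross c d)) x = snd (cube_cross (cube_face j e c) d) x"
    using x ci s0 m by (simp add: snd_face snd_cross s1 s2)
qed (use j in auto)

lemma face_cross_r:
  assumes j: "fst c \<le> j" "j < fst c + fst d" and e: "0 \<le> e" "e \<le> 1"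
  shows "cube_face j e (cube_cross c d) = cube_cross c (cube_face (j - fst c) e d)"
proof (rule cube_eqI2)
  obtain k where k: "fst d = Suc k" using j by (cases "fst d") auto
  let ?m = "fst c"
  fix x assume x0: "x \<in> unit_cube (fst (cube_face j e (cube_cross c d)))"
  then have x: "x \<in> unit_cube (?m + k)" using k by simp
  have ci: "coord_ins j e x \<in> unit_cube (?m + Suc k)"
    using j k e coord_ins_in[OF x, of j e] by simp
  have s1: "seg 0 ?m (coord_ins j e x) = seg 0 ?m x"
    using seg_ci_before[of 0 ?m j e x] j by simp
  have s2: "seg ?m (Suc k) (coord_ins j e x) = coord_ins (j - ?m) e (seg ?m k x)"
    using seg_ci_inside[of ?m j "Suc k" e x] j k by simp
  have s0: "seg ?m k x \<in> unit_cube k" by (rule seg_in[OF x])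
  show "snd (cube_face j e (cube_cross c d)) x = snd (cube_cross c (cube_face (j - fst c) e d)) x"
    using x ci s0 k by (simp add: snd_face snd_cross s1 s2)
qed (use j in auto)


lemma sum_upd: "r < length xs \<Longrightarrow>
   sum_list (map fst (xs[r := c])) + fst (xs ! r) = sum_list (map fst xs) + (fst c :: nat)"
proof (induction xs arbitrary: r)
  case Nil then show ?case by simp
next
  case (Cons a xs) then show ?case by (cases r) auto
qed

lemma pfx_upd_le: "i \<le> r \<Longrightarrow> pfx (cs[r := c]) i = pfx cs i"
  by (simp add: take_update_cancel)

lemma pfx_upd_gt: "r < i \<Longrightarrow> r < length cs \<Longrightarrow> pfx (cs[r := c]) i + fst (cs ! r) = pfx cs i + fst c"
proof -
  assume ri: "r < i" and r: "r < length cs"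
  have "take i (cs[r := c]) = (take i cs)[r := c]" by (simp add: take_update_swap)
  moreover have "take i cs ! r = cs ! r" using ri by simp
  moreover have "r < length (take i cs)" using ri r by simp
  ultimately show ?thesis using sum_upd[of r "take i cs" c] by simp
qed

lemma face_tuple:
  assumes r: "r < length cs" and j: "j < fst (cs ! r)" and e: "0 \<le> e" "e \<le> 1"
  shows "cube_face (pfx cs r + j) e (cube_tuple cs) = cube_tuple (cs[r := cube_face j e (cs ! r)])"
proof -
  let ?c = "cube_face j e (cs ! r)"
  let ?cs' = "cs[r := ?c]"
  let ?J = "pfx cs r + j"
  let ?Q = "sum_list (map fst cs)"
  have Q': "sum_list (map fst ?cs') + 1 = ?Q"
    using sum_upd[OF r, of ?c] j by simp
  have JQ: "pfx cs r + fst (cs ! r) \<le> ?Q"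
    using pfx_le_total[where cs=cs and i="Suc r"] pfx_Suc[OF r] by simp
  show ?thesis
  proof (rule cube_eqI2)
    show "fst (cube_face ?J e (cube_tuple cs)) = fst (cube_tuple ?cs')" using Q' by simp
    show "snd (cube_face ?J e (cube_tuple cs)) \<in> extensional (unit_cube (fst (cube_face ?J e (cube_tuple cs))))"
      by simp
    show "snd (cube_tuple ?cs') \<in> extensional (unit_cube (fst (cube_tuple ?cs')))" by simp
    fix x assume x0: "x \<in> unit_cube (fst (cube_face ?J e (cube_tuple cs)))"
    have QQ: "?Q - 1 = sum_list (map fst ?cs')" using Q' by linarith
    from x0 have x: "x \<in> unit_cube (sum_list (map fst ?cs'))" by (simp only: fst_face fst_tuple QQ)
    have ci: "coord_ins ?J e x \<in> unit_cube ?Q"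
      using coord_ins_in[OF x, of ?J e] e Q' j JQ by simp
    have comp: "snd (cs ! i) (seg (pfx cs i) (fst (cs ! i)) (coord_ins ?J e x)) =
                snd (?cs' ! i) (seg (pfx ?cs' i) (fst (?cs' ! i)) x)" if i: "i < length cs" for i
    proof -
      consider "i < r" | "i = r" | "r < i" by linarith
      then show ?thesis
      proof cases
        case 1
        then have "pfx cs i + fst (cs ! i) \<le> ?J" using pfx_lt[where i=i and r=r and cs=cs] r by simp
        then show ?thesis using 1 by (simp add: seg_ci_before pfx_upd_le)
      next
        case 2
        have s: "seg (pfx cs r) (fst (cs ! r)) (coord_ins ?J e x) = coord_ins j e (seg (pfx cs r) (fst (cs ! r) - 1) x)"
          using seg_ci_inside[of "pfx cs r" ?J "fst (cs ! r)" e x] j by simp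
        have "seg (pfx cs r) (fst (cs ! r) - 1) x \<in> unit_cube (fst (cs ! r) - 1)" by (rule seg_in[OF x])
        then show ?thesis using 2 r s by (simp add: pfx_upd_le snd_face)
      next
        case 3
        have a: "pfx ?cs' i + fst (cs ! r) = pfx cs i + (fst (cs ! r) - 1)"
          using pfx_upd_gt[OF 3 r, of ?c] by simp
        have b: "pfx cs r + fst (cs ! r) \<le> pfx cs i" using pfx_lt[where i=r and r=i and cs=cs] 3 i by simp
        have p: "pfx ?cs' i = pfx cs i - 1" using a j by simp
        have "?J < pfx cs i" using b j by simp
        then show ?thesis using 3 p by (simp add: seg_ci_after)
      qed
    qed
    show "snd (cube_face ?J e (cube_tuple cs)) x = snd (cube_tuple ?cs') x"
      using x0 x ci comp by (simp add: snd_face snd_tuple Q'[symmetric] cong: restrict_cong)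
  qed
qed


section \<open>raw boundary and Leibniz rules\<close>

definition rawB :: "'a cube \<Rightarrow> ('a cube \<Rightarrow>\<^sub>0 int)" where
  "rawB c = (\<Sum>j<fst c. frag_cmul ((-1) ^ (Suc j)) (frag_of (cube_face j 0 c) - frag_of (cube_face j 1 c)))"

lemma cube_boundary_rawB: "cube_boundary c = nd (rawB c)"
  by (simp add: cube_boundary_def rawB_def)

lemma sum_lessThan_add: "(\<Sum>j<m + k. f j) = (\<Sum>j<m. f j) + (\<Sum>j<k. f (m + j))"
  for f :: "nat \<Rightarrow> 'b::comm_monoid_add"
  by (induction k) (auto simp: add.assoc)

lemma sum_list_split:
  "(\<Sum>j<sum_list qs. f j) = (\<Sum>r<length qs. \<Sum>j<qs ! r. f (sum_list (take r qs) + j))"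
  for f :: "nat \<Rightarrow> 'b::comm_monoid_add"
proof (induction qs rule: rev_induct)
  case Nil then show ?case by simp
next
  case (snoc q qs)
  have "(\<Sum>j<sum_list (qs @ [q]). f j) = (\<Sum>j<sum_list qs. f j) + (\<Sum>j<q. f (sum_list qs + j))"
    by (simp add: sum_lessThan_add)
  also have "(\<Sum>j<sum_list qs. f j) = (\<Sum>r<length qs. \<Sum>j<(qs @ [q]) ! r. f (sum_list (take r (qs @ [q])) + j))"
    using snoc by (auto simp: nth_append intro!: sum.cong)
  finally show ?case by simp
qed

lemma frag_extend_rawB: "frag_extend g (rawB c) =
  (\<Sum>j<fst c. frag_cmul ((-1) ^ (Suc j)) (g (cube_face j 0 c) - g (cube_face j 1 c)))"
  by (simp add: rawB_def frag_extend_sum frag_extend_cmul frag_extend_diff o_def)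

lemma rawB_push: "rawB (cube_push f c) = frag_extend (\<lambda>c'. frag_of (cube_push f c')) (rawB c)"
  unfolding frag_extend_rawB by (simp add: rawB_def face_push)

lemma rawB_cross: "rawB (cube_cross c d) =
   frag_extend (\<lambda>c'. frag_of (cube_cross c' d)) (rawB c) +
   frag_cmul ((-1) ^ fst c) (frag_extend (\<lambda>d'. frag_of (cube_cross c d')) (rawB d))"
  unfolding frag_extend_rawB
  by (simp add: rawB_def sum_lessThan_add face_cross_l face_cross_r frag_cmul_sum frag_cmul_distrib2 power_add)

lemma rawB_tuple: "rawB (cube_tuple cs) =
   (\<Sum>r<length cs. frag_cmul ((-1) ^ pfx cs r)
       (frag_extend (\<lambda>c'. frag_of (cube_tuple (cs[r := c']))) (rawB (cs ! r))))"
  unfolding frag_extend_rawB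
  by (auto simp: rawB_def sum_list_split face_tuple frag_cmul_sum frag_cmul_distrib2 power_add take_map intro!: sum.cong)


section \<open>boundary of degenerate cubes\<close>

lemma ci_upd_same: "coord_ins j 0 x = (coord_ins j e x)(j := 0)"
  unfolding coord_ins_def by (rule ext) auto

lemma ci_upd_other:
  "j0 \<noteq> j \<Longrightarrow> coord_ins j e (x((if j0 < j then j0 else j0 - 1) := 0)) = (coord_ins j e x)(j0 := 0)"
  unfolding coord_ins_def by (rule ext) auto

lemma degenerate_rawB:
  assumes dg: "degenerate_cube K"
  shows "nd (rawB K) = 0"
proof -
  obtain j0 where j0: "j0 < fst K" and h: "\<And>x. x \<in> unit_cube (fst K) \<Longrightarrow> snd K x = snd K (x(j0 := 0))"
    using dg unfolding degenerate_cube_def by blast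
  obtain m where m: "fst K = Suc m" using j0 by (cases "fst K") auto
  have term0: "nd (frag_of (cube_face j 0 K)) - nd (frag_of (cube_face j 1 K)) = 0" if j: "j < fst K" for j
  proof (cases "j = j0")
    case True
    have "cube_face j 0 K = cube_face j 1 K"
    proof (rule cube_eqI2)
      fix x assume "x \<in> unit_cube (fst (cube_face j 0 K))"
      then have x: "x \<in> unit_cube m" using m by simp
      have c0: "coord_ins j 0 x \<in> unit_cube (fst K)" using coord_ins_in[OF x, of j 0] j m by simp
      have c1: "coord_ins j 1 x \<in> unit_cube (fst K)" using coord_ins_in[OF x, of j 1] j m by simp
      have "snd K (coord_ins j 1 x) = snd K ((coord_ins j 1 x)(j0 := 0))" using h[OF c1] .
      also have "(coord_ins j 1 x)(j0 := 0) = coord_ins j 0 x" using ci_upd_same[of j x 1] True by simp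
      finally show "snd (cube_face j 0 K) x = snd (cube_face j 1 K) x" using x m by (simp add: snd_face)
    qed simp_all
    then show ?thesis by simp
  next
    case False
    let ?j' = "if j0 < j then j0 else j0 - 1"
    have dgf: "degenerate_cube (cube_face j e K)" if e: "0 \<le> e" "e \<le> 1" for e
      unfolding degenerate_cube_def
    proof (intro exI conjI ballI)
      show "?j' < fst (cube_face j e K)" using j j0 m False by auto
      fix x assume "x \<in> unit_cube (fst (cube_face j e K))"
      then have x: "x \<in> unit_cube m" using m by simp
      have x': "x(?j' := 0) \<in> unit_cube m" using x j j0 m False by (intro upd0_in) auto
      have c: "coord_ins j e x \<in> unit_cube (fst K)" using coord_ins_in[OF x, of j e] j m e by simp
      have "snd K (coord_ins j e x) = snd K ((coord_ins j e x)(j0 := 0))" using h[OF c] .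
      also have "(coord_ins j e x)(j0 := 0) = coord_ins j e (x(?j' := 0))" using ci_upd_other[of j0 j e x] False by simp
      finally show "snd (cube_face j e K) x = snd (cube_face j e K) (x(?j' := 0))"
        using x x' m by (simp add: snd_face)
    qed
    show ?thesis using dgf[of 0] dgf[of 1] by (simp add: nd_of)
  qed
  have "nd (rawB K) = (\<Sum>j<fst K. frag_cmul ((-1) ^ (Suc j))
            (nd (frag_of (cube_face j 0 K)) - nd (frag_of (cube_face j 1 K))))"
    by (simp add: rawB_def nd_sum nd_cmul nd_diff)
  also have "\<dots> = 0" using term0 by simp
  finally show ?thesis .
qed

lemma boundary_nd_of: "frag_extend cube_boundary (nd (frag_of K)) = nd (rawB K)"
  using degenerate_rawB[of K] by (simp add: nd_of cube_boundary_rawB)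


section \<open>The cubes defining phi\<close>

definition Pn :: "(nat \<Rightarrow> (nat \<Rightarrow> real) \<Rightarrow> 'f \<Rightarrow> (nat \<Rightarrow> 'x loop) \<Rightarrow> 'g) \<Rightarrow> nat \<Rightarrow> 'f cube \<Rightarrow> 'x loop cube list \<Rightarrow> 'g cube" where
  "Pn phi n a cs = cube_push (\<lambda>(t, a, gs). phi n t a gs) (cube_cross (id_cube n) (cube_cross a (cube_tuple cs)))"

definition tface where
  "tface phi n a cs j e = cube_push (\<lambda>(t, a, gs). phi n t a gs)
      (cube_cross (cube_face j e (id_cube n)) (cube_cross a (cube_tuple cs)))"

lemma chain_phi_Pn: "chain_phi phi m ac = nd (frag_of (Pn phi (m - 1) (fst ac) (snd ac)))"
  by (simp add: chain_phi_def Pn_def)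

lemma fst_Pn[simp]: "fst (Pn phi n a cs) = n + fst a + sum_list (map fst cs)"
  by (simp add: Pn_def)

lemma fst_tface[simp]: "fst (tface phi n a cs j e) = n - 1 + fst a + sum_list (map fst cs)"
  by (simp add: tface_def)

lemma ext_Pn[simp]: "k = n + fst a + sum_list (map fst cs) \<Longrightarrow> snd (Pn phi n a cs) \<in> extensional (unit_cube k)"
  by (simp add: Pn_def)

lemma ext_tface[simp]: "k = n - 1 + fst a + sum_list (map fst cs) \<Longrightarrow> snd (tface phi n a cs j e) \<in> extensional (unit_cube k)"
  by (simp add: tface_def)

lemma seg_seg: "k + m \<le> m' \<Longrightarrow> seg k m (seg k' m' x) = seg (k' + k) m x"
  unfolding seg_def by (rule ext) (auto simp: add.assoc)

lemma snd_Pn: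
  assumes "x \<in> unit_cube (n + fst a + sum_list (map fst cs))"
  shows "snd (Pn phi n a cs) x = phi n (seg 0 n x) (snd a (seg n (fst a) x))
            (snd (cube_tuple cs) (seg (n + fst a) (sum_list (map fst cs)) x))"
proof -
  let ?p = "fst a" and ?Q = "sum_list (map fst cs)"
  have x: "x \<in> unit_cube (n + (?p + ?Q))" using assms by (simp add: add.assoc)
  have y: "seg n (?p + ?Q) x \<in> unit_cube (?p + ?Q)" by (rule seg_in[OF x])
  show ?thesis using x y seg_in[OF x, of 0 n]
    by (simp add: Pn_def snd_push snd_cross snd_id seg_seg)
qed

lemma snd_tface:
  assumes "x \<in> unit_cube (n - 1 + fst a + sum_list (map fst cs))" "j < n" "0 \<le> e" "e \<le> 1"
  shows "snd (tface phi n a cs j e) x = phi n (coord_ins j e (seg 0 (n - 1) x)) (snd a (seg (n - 1) (fst a) x))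
            (snd (cube_tuple cs) (seg (n - 1 + fst a) (sum_list (map fst cs)) x))"
proof -
  let ?p = "fst a" and ?Q = "sum_list (map fst cs)"
  have x: "x \<in> unit_cube (n - 1 + (?p + ?Q))" using assms by (simp add: add.assoc)
  have y: "seg (n - 1) (?p + ?Q) x \<in> unit_cube (?p + ?Q)" by (rule seg_in[OF x])
  have z: "seg 0 (n - 1) x \<in> unit_cube (n - 1)" by (rule seg_in[OF x])
  have zz: "coord_ins j e (seg 0 (n - 1) x) \<in> unit_cube n"
    using coord_ins_in[OF z, of j e] assms by simp
  show ?thesis using x y z zz assms
    by (simp add: tface_def snd_push snd_cross snd_id snd_face seg_seg)
qed


lemma rawB_Pn: "rawB (Pn phi n a cs) =
   (\<Sum>j<n. frag_cmul ((-1) ^ Suc j) (frag_of (tface phi n a cs j 0) - frag_of (tface phi n a cs j 1)))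
 + frag_cmul ((-1) ^ n) (frag_extend (\<lambda>a'. frag_of (Pn phi n a' cs)) (rawB a))
 + frag_cmul ((-1) ^ (n + fst a)) (\<Sum>r<length cs. frag_cmul ((-1) ^ pfx cs r)
       (frag_extend (\<lambda>c'. frag_of (Pn phi n a (cs[r := c']))) (rawB (cs ! r))))"
proof -
  have "rawB (Pn phi n a cs) = frag_extend (\<lambda>c'. frag_of (cube_push (\<lambda>(t, a, gs). phi n t a gs) c'))
     (rawB (cube_cross (id_cube n) (cube_cross a (cube_tuple cs))))"
    by (simp add: Pn_def rawB_push)
  also have "\<dots> = (\<Sum>j<n. frag_cmul ((-1) ^ Suc j) (frag_of (tface phi n a cs j 0) - frag_of (tface phi n a cs j 1)))
 + frag_cmul ((-1) ^ n) (frag_extend (\<lambda>a'. frag_of (Pn phi n a' cs)) (rawB a))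
 + frag_cmul ((-1) ^ (n + fst a)) (\<Sum>r<length cs. frag_cmul ((-1) ^ pfx cs r)
       (frag_extend (\<lambda>c'. frag_of (Pn phi n a (cs[r := c']))) (rawB (cs ! r))))"
    unfolding rawB_cross rawB_tuple
    by (simp add: frag_extend_add frag_extend_diff frag_extend_cmul frag_extend_sum frag_extend_compose2 o_def
          frag_cmul_distrib2 power_add frag_extend_rawB[of _ "id_cube n"] tface_def Pn_def add.assoc)
  finally show ?thesis .
qed


lemma topspace_cube_top: "topspace (cube_top n) = unit_cube n"
  by (simp add: cube_top_def)

lemma sing_val: "singular_cube Y c \<Longrightarrow> x \<in> unit_cube (fst c) \<Longrightarrow> snd c x \<in> topspace Y"
  unfolding singular_cube_def
  using continuous_map_image_subset_topspace topspace_cube_top by fastforce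

lemma tuple_val_in:
  assumes "\<forall>c\<in>set cs. singular_cube (Omega_top X x0) c" "x \<in> unit_cube (sum_list (map fst cs))"
  shows "snd (cube_tuple cs) x \<in> topspace (Omega_pow X x0 (length cs))"
proof -
  have "snd (cs ! i) (seg (pfx cs i) (fst (cs ! i)) x) \<in> topspace (Omega_top X x0)" if "i < length cs" for i
    using assms(1) that by (intro sing_val[OF _ seg_in[OF assms(2)]]) auto
  then show ?thesis using assms(2)
    by (simp add: snd_tuple Omega_pow_def topspace_product_topology)
qed

lemma hypD:
  assumes "top_ainf_morphism X x0 F nuF G nuG phi" "1 \<le> n" "t \<in> unit_cube n" "a \<in> topspace F"
    "gs \<in> topspace (Omega_pow X x0 n)"
  shows "t 0 = 1 \<Longrightarrow> phi n t a gs =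
           phi (n - 1) (del_coord 0 t) (nuF a (gs 0)) (restrict (\<lambda>i. gs (Suc i)) {..<n - 1})"
    and "1 \<le> k \<Longrightarrow> k < n \<Longrightarrow> t k = 1 \<Longrightarrow> phi n t a gs =
           phi (n - 1) (del_coord k t) a
               (restrict (\<lambda>i. if i < k - 1 then gs i
                               else if i = k - 1 then loop_concat (gs (k - 1)) (gs k)
                               else gs (Suc i)) {..<n - 1})"
    and "k < n \<Longrightarrow> t k = 0 \<Longrightarrow> phi n t a gs =
           nuG (phi k (trunc_coord k t) a (restrict gs {..<k})) (loop_prod (map gs [k..<n]))"
  using assms unfolding top_ainf_morphism_def by blast+

lemma tface_degen:
  assumes H: "top_ainf_morphism X x0 F nuF G nuG phi" and Ha: "singular_cube F a"
    and Hc: "\<forall>c\<in>set cs. singular_cube (Omega_top X x0) c" and len: "length cs = n"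
    and j: "Suc j < n"
  shows "degenerate_cube (tface phi n a cs j 0)"
  unfolding degenerate_cube_def
proof (intro exI conjI ballI)
  let ?p = "fst a" and ?Q = "sum_list (map fst cs)"
  show "j < fst (tface phi n a cs j 0)" using j by simp
  fix x assume x0: "x \<in> unit_cube (fst (tface phi n a cs j 0))"
  then have x: "x \<in> unit_cube (n - 1 + ?p + ?Q)" by simp
  have x': "x(j := 0) \<in> unit_cube (n - 1 + ?p + ?Q)" using x j by (intro upd0_in) auto
  let ?z = "seg 0 (n - 1) x"
  have z: "?z \<in> unit_cube (n - 1)" by (rule seg_in[OF x])
  have zz: "?z(j := 0) \<in> unit_cube (n - 1)" using z j by (intro upd0_in) auto
  have s1: "seg 0 (n - 1) (x(j := 0)) = ?z(j := 0)" using j by (simp add: seg_upd_in)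
  have s2: "seg (n - 1) ?p (x(j := 0)) = seg (n - 1) ?p x" using j by (intro seg_upd_out) auto
  have s3: "seg (n - 1 + ?p) ?Q (x(j := 0)) = seg (n - 1 + ?p) ?Q x" using j by (intro seg_upd_out) auto
  let ?al = "snd a (seg (n - 1) ?p x)"
  let ?gs = "snd (cube_tuple cs) (seg (n - 1 + ?p) ?Q x)"
  have al: "?al \<in> topspace F" by (rule sing_val[OF Ha seg_in[OF x]])
  have gs: "?gs \<in> topspace (Omega_pow X x0 n)" using tuple_val_in[OF Hc seg_in[OF x]] len by simp
  have t1: "coord_ins j 0 ?z \<in> unit_cube n" using coord_ins_in[OF z, of j 0] j by simp
  have t2: "coord_ins j 0 (?z(j := 0)) \<in> unit_cube n" using coord_ins_in[OF zz, of j 0] j by simp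
  have tr: "trunc_coord j (coord_ins j 0 (?z(j := 0))) = trunc_coord j (coord_ins j 0 ?z)"
    unfolding trunc_coord_def coord_ins_def by (rule ext) auto
  have cj: "coord_ins j 0 w j = 0" for w :: "nat \<Rightarrow> real" by (simp add: coord_ins_def)
  have "snd (tface phi n a cs j 0) x = phi n (coord_ins j 0 ?z) ?al ?gs"
    using snd_tface[OF x, of j 0] j by simp
  also have "\<dots> = nuG (phi j (trunc_coord j (coord_ins j 0 ?z)) ?al (restrict ?gs {..<j})) (loop_prod (map ?gs [j..<n]))"
    using hypD(3)[OF H _ t1 al gs, of j] j cj by simp
  also have "\<dots> = phi n (coord_ins j 0 (?z(j := 0))) ?al ?gs"
    using hypD(3)[OF H _ t2 al gs, of j] j cj tr by simp
  also have "\<dots> = snd (tface phi n a cs j 0) (x(j := 0))"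
    using snd_tface[OF x', where phi=phi and j=j and e=0] j s1 s2 s3 by simp
  finally show "snd (tface phi n a cs j 0) x = snd (tface phi n a cs j 0) (x(j := 0))" .
qed


lemma pfx_bound: "i < length cs \<Longrightarrow> pfx cs i + fst (cs ! i) \<le> sum_list (map fst cs)"
  using pfx_Suc[where i=i and cs=cs] pfx_le_total[where i="Suc i" and cs=cs] by simp

lemma tuple_seg_restrict:
  assumes "x \<in> unit_cube M"
  shows "snd (cube_tuple cs) (seg k (sum_list (map fst cs)) x) =
         restrict (\<lambda>i. snd (cs ! i) (seg (k + pfx cs i) (fst (cs ! i)) x)) {..<length cs}"
  using seg_in[OF assms, of k "sum_list (map fst cs)"]
  by (auto simp: snd_tuple seg_seg pfx_bound intro!: restrict_ext)

lemma tface_last: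
  assumes H: "top_ainf_morphism X x0 F nuF G nuG phi" and Ha: "singular_cube F a"
    and Hc: "\<forall>c\<in>set (cs' @ [c]). singular_cube (Omega_top X x0) c" and len: "length cs' + 1 = n"
  shows "tface phi n a (cs' @ [c]) (n - 1) 0 = cube_push (\<lambda>(b, g). nuG b g) (cube_cross (Pn phi (n - 1) a cs') c)"
proof (rule cube_eqI2)
  let ?p = "fst a" and ?Q = "sum_list (map fst cs')" and ?q = "fst c"
  let ?D = "n - 1 + ?p + ?Q"
  show "fst (tface phi n a (cs' @ [c]) (n - 1) 0) = fst (cube_push (\<lambda>(b, g). nuG b g) (cube_cross (Pn phi (n - 1) a cs') c))"
    by simp
  show "snd (tface phi n a (cs' @ [c]) (n - 1) 0) \<in> extensional (unit_cube (fst (tface phi n a (cs' @ [c]) (n - 1) 0)))"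
    by simp
  show "snd (cube_push (\<lambda>(b, g). nuG b g) (cube_cross (Pn phi (n - 1) a cs') c)) \<in>
        extensional (unit_cube (fst (cube_push (\<lambda>(b, g). nuG b g) (cube_cross (Pn phi (n - 1) a cs') c))))"
    by simp
  fix x assume x0: "x \<in> unit_cube (fst (tface phi n a (cs' @ [c]) (n - 1) 0))"
  then have x: "x \<in> unit_cube (n - 1 + ?p + sum_list (map fst (cs' @ [c])))" by simp
  have xD: "x \<in> unit_cube (?D + ?q)" using x by (simp add: add.assoc)
  let ?z = "seg 0 (n - 1) x"
  have z: "?z \<in> unit_cube (n - 1)" by (rule seg_in[OF x])
  let ?al = "snd a (seg (n - 1) ?p x)"
  let ?gs = "snd (cube_tuple (cs' @ [c])) (seg (n - 1 + ?p) (sum_list (map fst (cs' @ [c]))) x)"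
  have al: "?al \<in> topspace F" by (rule sing_val[OF Ha seg_in[OF x]])
  have gs: "?gs \<in> topspace (Omega_pow X x0 n)" using tuple_val_in[OF Hc seg_in[OF x]] len by simp
  have t1: "coord_ins (n - 1) 0 ?z \<in> unit_cube n" using coord_ins_in[OF z, of "n - 1" 0] len by simp
  have cj: "coord_ins (n - 1) 0 ?z (n - 1) = 0" by (simp add: coord_ins_def)
  have tr: "trunc_coord (n - 1) (coord_ins (n - 1) 0 ?z) = ?z"
    unfolding trunc_coord_def coord_ins_def seg_def by (rule ext) auto
  have ups: "[n - 1..<n] = [n - 1]" using len by (simp add: upt_rec)
  have gse: "?gs = restrict (\<lambda>i. snd ((cs' @ [c]) ! i) (seg (n - 1 + ?p + pfx (cs' @ [c]) i) (fst ((cs' @ [c]) ! i)) x)) {..<length (cs' @ [c])}"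
    by (rule tuple_seg_restrict[OF x])
  have nl: "n - 1 = length cs'" using len by simp
  have gsl: "?gs (n - 1) = snd c (seg ?D ?q x)"
    unfolding gse using nl by (simp add: nth_append add.assoc)
  have gsr: "restrict ?gs {..<n - 1} = snd (cube_tuple cs') (seg (n - 1 + ?p) ?Q x)"
    using len unfolding gse tuple_seg_restrict[OF x, where k="n - 1 + ?p" and cs=cs'] by (auto simp: nth_append intro!: restrict_ext)
  have "snd (tface phi n a (cs' @ [c]) (n - 1) 0) x = phi n (coord_ins (n - 1) 0 ?z) ?al ?gs"
    using snd_tface[OF x, where phi=phi and j="n - 1" and e=0] len by simp
  also have "\<dots> = nuG (phi (n - 1) ?z ?al (snd (cube_tuple cs') (seg (n - 1 + ?p) ?Q x))) (snd c (seg ?D ?q x))"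
    using hypD(3)[OF H _ t1 al gs, of "n - 1"] len cj tr ups gsl gsr by simp
  also have "\<dots> = snd (cube_push (\<lambda>(b, g). nuG b g) (cube_cross (Pn phi (n - 1) a cs') c)) x"
  proof -
    have y: "seg 0 ?D x \<in> unit_cube ?D" by (rule seg_in[OF xD])
    have "snd (Pn phi (n - 1) a cs') (seg 0 ?D x) = phi (n - 1) ?z ?al (snd (cube_tuple cs') (seg (n - 1 + ?p) ?Q x))"
      using snd_Pn[OF y] by (simp add: seg_seg)
    then show ?thesis using xD y by (simp add: snd_push snd_cross)
  qed
  finally show "snd (tface phi n a (cs' @ [c]) (n - 1) 0) x = snd (cube_push (\<lambda>(b, g). nuG b g) (cube_cross (Pn phi (n - 1) a cs') c)) x" .
qed


lemma tface_first:
  assumes H: "top_ainf_morphism X x0 F nuF G nuG phi" and Ha: "singular_cube F a"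
    and Hc: "\<forall>c\<in>set (c # cs'). singular_cube (Omega_top X x0) c" and len: "length cs' + 1 = n"
  shows "tface phi n a (c # cs') 0 1 = Pn phi (n - 1) (cube_push (\<lambda>(a, g). nuF a g) (cube_cross a c)) cs'"
proof (rule cube_eqI2)
  let ?p = "fst a" and ?Q = "sum_list (map fst cs')" and ?q = "fst c"
  let ?a' = "cube_push (\<lambda>(a, g). nuF a g) (cube_cross a c)"
  show "fst (tface phi n a (c # cs') 0 1) = fst (Pn phi (n - 1) ?a' cs')" by simp
  show "snd (tface phi n a (c # cs') 0 1) \<in> extensional (unit_cube (fst (tface phi n a (c # cs') 0 1)))"
    by simp
  show "snd (Pn phi (n - 1) ?a' cs') \<in> extensional (unit_cube (fst (Pn phi (n - 1) ?a' cs')))" by simp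
  fix x assume x0: "x \<in> unit_cube (fst (tface phi n a (c # cs') 0 1))"
  then have x: "x \<in> unit_cube (n - 1 + ?p + sum_list (map fst (c # cs')))" by simp
  have x2: "x \<in> unit_cube (n - 1 + fst ?a' + ?Q)" using x by (simp add: add.assoc)
  let ?z = "seg 0 (n - 1) x"
  have z: "?z \<in> unit_cube (n - 1)" by (rule seg_in[OF x])
  let ?al = "snd a (seg (n - 1) ?p x)"
  let ?gs = "snd (cube_tuple (c # cs')) (seg (n - 1 + ?p) (sum_list (map fst (c # cs'))) x)"
  have al: "?al \<in> topspace F" by (rule sing_val[OF Ha seg_in[OF x]])
  have gs: "?gs \<in> topspace (Omega_pow X x0 n)" using tuple_val_in[OF Hc seg_in[OF x]] len by simp
  have t1: "coord_ins 0 1 ?z \<in> unit_cube n" using coord_ins_in[OF z, of 0 1] len by simp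
  have c0: "coord_ins 0 1 ?z 0 = 1" by (simp add: coord_ins_def)
  have dl: "del_coord 0 (coord_ins 0 1 ?z) = ?z"
    unfolding del_coord_def coord_ins_def by (rule ext) auto
  have gse: "?gs = restrict (\<lambda>i. snd ((c # cs') ! i) (seg (n - 1 + ?p + pfx (c # cs') i) (fst ((c # cs') ! i)) x)) {..<length (c # cs')}"
    by (rule tuple_seg_restrict[OF x])
  have nl: "n - 1 = length cs'" using len by simp
  have gs0: "?gs 0 = snd c (seg (n - 1 + ?p) ?q x)"
    unfolding gse by simp
  have gsr: "restrict (\<lambda>i. ?gs (Suc i)) {..<n - 1} = snd (cube_tuple cs') (seg (n - 1 + fst ?a') ?Q x)"
    unfolding gse tuple_seg_restrict[OF x, where k="n - 1 + fst ?a'" and cs=cs'] using nl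
    by (auto simp: add.assoc intro!: restrict_ext)
  have "snd (tface phi n a (c # cs') 0 1) x = phi n (coord_ins 0 1 ?z) ?al ?gs"
    using snd_tface[OF x, where phi=phi and j=0 and e=1] len by simp
  also have "\<dots> = phi (n - 1) ?z (nuF ?al (snd c (seg (n - 1 + ?p) ?q x)))
                    (snd (cube_tuple cs') (seg (n - 1 + fst ?a') ?Q x))"
    using hypD(1)[OF H _ t1 al gs] len c0 dl gs0 gsr by simp
  also have "\<dots> = snd (Pn phi (n - 1) ?a' cs') x"
  proof -
    have y: "seg (n - 1) (?p + ?q) x \<in> unit_cube (?p + ?q)" by (rule seg_in[OF x])
    have "snd ?a' (seg (n - 1) (fst ?a') x) = nuF ?al (snd c (seg (n - 1 + ?p) ?q x))"
      using y by (simp add: snd_push snd_cross seg_seg)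
    then show ?thesis using snd_Pn[OF x2, where phi=phi] by simp
  qed
  finally show "snd (tface phi n a (c # cs') 0 1) x = snd (Pn phi (n - 1) ?a' cs') x" .
qed


lemma tface_mid:
  assumes H: "top_ainf_morphism X x0 F nuF G nuG phi" and Ha: "singular_cube F a"
    and Hc: "\<forall>c\<in>set (A @ [c1, c2] @ B). singular_cube (Omega_top X x0) c"
    and len: "length (A @ [c1, c2] @ B) = n" and lA: "length A + 1 = j"
  shows "tface phi n a (A @ [c1, c2] @ B) j 1 =
         Pn phi (n - 1) a (A @ [cube_push (\<lambda>(g, h). loop_concat g h) (cube_cross c1 c2)] @ B)"
proof (rule cube_eqI2)
  let ?cs = "A @ [c1, c2] @ B"
  let ?M = "cube_push (\<lambda>(g, h). loop_concat g h) (cube_cross c1 c2)"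
  let ?cs' = "A @ [?M] @ B"
  let ?p = "fst a"
  have Qe: "sum_list (map fst ?cs') = sum_list (map fst ?cs)" by simp
  show "fst (tface phi n a ?cs j 1) = fst (Pn phi (n - 1) a ?cs')" by simp
  show "snd (tface phi n a ?cs j 1) \<in> extensional (unit_cube (fst (tface phi n a ?cs j 1)))"
    by simp
  show "snd (Pn phi (n - 1) a ?cs') \<in> extensional (unit_cube (fst (Pn phi (n - 1) a ?cs')))" by simp
  fix x assume x0: "x \<in> unit_cube (fst (tface phi n a ?cs j 1))"
  then have x: "x \<in> unit_cube (n - 1 + ?p + sum_list (map fst ?cs))" by simp
  have x2: "x \<in> unit_cube (n - 1 + ?p + sum_list (map fst ?cs'))" using x by (simp only: Qe)
  let ?z = "seg 0 (n - 1) x"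
  have z: "?z \<in> unit_cube (n - 1)" by (rule seg_in[OF x])
  let ?al = "snd a (seg (n - 1) ?p x)"
  let ?K = "n - 1 + ?p"
  let ?gs = "snd (cube_tuple ?cs) (seg ?K (sum_list (map fst ?cs)) x)"
  have al: "?al \<in> topspace F" by (rule sing_val[OF Ha seg_in[OF x]])
  have gs: "?gs \<in> topspace (Omega_pow X x0 n)" using tuple_val_in[OF Hc seg_in[OF x]] len by simp
  have t1: "coord_ins j 1 ?z \<in> unit_cube n" using coord_ins_in[OF z, of j 1] len lA by simp
  have c0: "coord_ins j 1 ?z j = 1" by (simp add: coord_ins_def)
  have dl: "del_coord j (coord_ins j 1 ?z) = ?z"
    unfolding del_coord_def coord_ins_def by (rule ext) auto
  have gse: "?gs = restrict (\<lambda>i. snd (?cs ! i) (seg (?K + pfx ?cs i) (fst (?cs ! i)) x)) {..<length ?cs}"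
    by (rule tuple_seg_restrict[OF x])
  have gse': "snd (cube_tuple ?cs') (seg ?K (sum_list (map fst ?cs')) x) =
     restrict (\<lambda>i. snd (?cs' ! i) (seg (?K + pfx ?cs' i) (fst (?cs' ! i)) x)) {..<length ?cs'}"
    by (rule tuple_seg_restrict[OF x])
  have comp: "(if i < j - 1 then ?gs i else if i = j - 1 then loop_concat (?gs (j - 1)) (?gs j) else ?gs (Suc i))
      = snd (?cs' ! i) (seg (?K + pfx ?cs' i) (fst (?cs' ! i)) x)" if i: "i < n - 1" for i
  proof -
    have jm: "j - 1 = length A" using lA by simp
    have jj: "j = Suc (length A)" using lA by simp
    consider "i < length A" | "i = length A" | "length A < i" by linarith
    then show ?thesis
    proof cases
      case 1
      then show ?thesis unfolding gse jm using len by (simp add: nth_append)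
    next
      case 2
      have y: "seg (?K + sum_list (map fst A)) (fst c1 + fst c2) x \<in> unit_cube (fst c1 + fst c2)"
        by (rule seg_in[OF x])
      have "snd ?M (seg (?K + sum_list (map fst A)) (fst c1 + fst c2) x) =
            loop_concat (snd c1 (seg (?K + sum_list (map fst A)) (fst c1) x))
                        (snd c2 (seg (?K + sum_list (map fst A) + fst c1) (fst c2) x))"
        using y by (simp add: snd_push snd_cross seg_seg add.assoc)
      then show ?thesis unfolding gse jm using 2 len by (simp add: nth_append add.assoc jj)
    next
      case 3
      then obtain m where m: "i = Suc (length A) + m" by (metis add_Suc less_iff_Suc_add)
      have "take (Suc (Suc (length A)) + m) ?cs = A @ [c1, c2] @ take m B" by simp
      moreover have "take (Suc (length A) + m) ?cs' = A @ [?M] @ take m B" by simp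
      moreover have "Suc (Suc (length A + m)) < n" using i m len by simp
      ultimately show ?thesis unfolding gse jm using 3 i len m
        by (simp add: nth_append add.assoc)
    qed
  qed
  have gsr: "restrict (\<lambda>i. if i < j - 1 then ?gs i else if i = j - 1 then loop_concat (?gs (j - 1)) (?gs j) else ?gs (Suc i)) {..<n - 1}
      = snd (cube_tuple ?cs') (seg ?K (sum_list (map fst ?cs')) x)"
    unfolding gse' using comp len by (auto intro!: restrict_ext)
  have "snd (tface phi n a ?cs j 1) x = phi n (coord_ins j 1 ?z) ?al ?gs"
    using snd_tface[OF x, where phi=phi and j=j and e=1] len lA by simp
  also have "\<dots> = phi (n - 1) ?z ?al (snd (cube_tuple ?cs') (seg ?K (sum_list (map fst ?cs')) x))"
    using hypD(2)[OF H _ t1 al gs, of j] len lA c0 dl gsr by simp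
  also have "\<dots> = snd (Pn phi (n - 1) a ?cs') x"
    using snd_Pn[OF x2, where phi=phi] by simp
  finally show "snd (tface phi n a ?cs j 1) x = snd (Pn phi (n - 1) a ?cs') x" .
qed



lemma degen_Pn_a: "degenerate_cube a \<Longrightarrow> degenerate_cube (Pn phi n a cs)"
  unfolding Pn_def by (intro degen_push degen_cross_r degen_cross_l)

lemma degen_Pn_c: "r < length cs \<Longrightarrow> degenerate_cube c \<Longrightarrow> degenerate_cube (Pn phi n a (cs[r := c]))"
  unfolding Pn_def by (intro degen_push degen_cross_r degen_tuple[where r=r]) auto

lemma frag_extend_nd_single:
  assumes "\<And>s. degenerate_cube s \<Longrightarrow> degenerate_cube (G s)"
  shows "frag_extend (\<lambda>s. nd (frag_of (G s))) (nd (frag_of M)) = nd (frag_of (G M))"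
  using frag_extend_nd_of[OF assms, where x="frag_of M"] by simp

lemma frag_cmul_diff2: "frag_cmul c (a - b) = frag_cmul c a - frag_cmul c b"
  by (metis add_diff_cancel frag_cmul_distrib2 diff_add_cancel)

lemma boundary_Pn:
  assumes H: "top_ainf_morphism X x0 F nuF G nuG phi" and Ha: "singular_cube F a"
    and Hc: "\<forall>c\<in>set cs. singular_cube (Omega_top X x0) c" and len: "length cs = n"
  shows "nd (rawB (Pn phi n a cs)) =
     (if 1 \<le> n then
        frag_cmul ((-1) ^ n) (nd (frag_of (cube_push (\<lambda>(b, g). nuG b g) (cube_cross (Pn phi (n - 1) a (butlast cs)) (last cs)))))
      + nd (frag_of (Pn phi (n - 1) (cube_push (\<lambda>(a, g). nuF a g) (cube_cross a (cs ! 0))) (tl cs)))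
      + (\<Sum>r<n - 1. frag_cmul ((-1) ^ Suc r) (nd (frag_of (Pn phi (n - 1) a
            (take r cs @ [cube_push (\<lambda>(g, h). loop_concat g h) (cube_cross (cs ! r) (cs ! Suc r))] @ drop (Suc (Suc r)) cs)))))
      else 0)
   + frag_cmul ((-1) ^ n) (nd (frag_extend (\<lambda>a'. frag_of (Pn phi n a' cs)) (rawB a)))
   + frag_cmul ((-1) ^ (n + fst a)) (\<Sum>r<n. frag_cmul ((-1) ^ pfx cs r)
       (nd (frag_extend (\<lambda>c'. frag_of (Pn phi n a (cs[r := c']))) (rawB (cs ! r)))))"
proof -
  define T where "T j e = nd (frag_of (tface phi n a cs j e))" for j e
  have main: "nd (rawB (Pn phi n a cs)) =
     (\<Sum>j<n. frag_cmul ((-1) ^ Suc j) (T j 0 - T j 1))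
   + frag_cmul ((-1) ^ n) (nd (frag_extend (\<lambda>a'. frag_of (Pn phi n a' cs)) (rawB a)))
   + frag_cmul ((-1) ^ (n + fst a)) (\<Sum>r<n. frag_cmul ((-1) ^ pfx cs r)
       (nd (frag_extend (\<lambda>c'. frag_of (Pn phi n a (cs[r := c']))) (rawB (cs ! r)))))"
    unfolding rawB_Pn T_def using len by (simp add: nd_add nd_diff nd_cmul nd_sum)
  show ?thesis
  proof (cases n)
    case 0
    then show ?thesis using main by simp
  next
    case (Suc m)
    have T0: "T j 0 = 0" if "j < m" for j
      using tface_degen[OF H Ha Hc len, of j] that Suc by (simp add: T_def nd_of)
    have cs_last: "cs = butlast cs @ [last cs]" using len Suc
      by (metis append_butlast_last_id list.size(3) nat.distinct(1))
    have T0m: "T m 0 = nd (frag_of (cube_push (\<lambda>(b, g). nuG b g) (cube_cross (Pn phi (n - 1) a (butlast cs)) (last cs))))"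
      using tface_last[OF H Ha _ , of "butlast cs" "last cs" n] Hc len Suc cs_last
      by (simp add: T_def)
    have cs_hd: "cs = cs ! 0 # tl cs" using len Suc by (cases cs) auto
    have T10: "T 0 1 = nd (frag_of (Pn phi (n - 1) (cube_push (\<lambda>(a, g). nuF a g) (cube_cross a (cs ! 0))) (tl cs)))"
      using tface_first[OF H Ha, of "cs ! 0" "tl cs" n] Hc len Suc cs_hd
      by (simp add: T_def)
    have T1r: "T (Suc r) 1 = nd (frag_of (Pn phi (n - 1) a
            (take r cs @ [cube_push (\<lambda>(g, h). loop_concat g h) (cube_cross (cs ! r) (cs ! Suc r))] @ drop (Suc (Suc r)) cs)))"
      if r: "r < m" for r
    proof -
      have rr: "Suc r < n" using r Suc by auto
      have dec: "cs = take r cs @ [cs ! r, cs ! Suc r] @ drop (Suc (Suc r)) cs"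
      proof -
        have l1: "r < length cs" "Suc r < length cs" using rr len by auto
        have "drop r cs = cs ! r # cs ! Suc r # drop (Suc (Suc r)) cs"
          using Cons_nth_drop_Suc[OF l1(1)] Cons_nth_drop_Suc[OF l1(2)] by simp
        then show ?thesis by (metis append_Cons append_Nil append_take_drop_id)
      qed
      have lA: "length (take r cs) + 1 = Suc r" using rr len by simp
      have Hc': "\<forall>c\<in>set (take r cs @ [cs ! r, cs ! Suc r] @ drop (Suc (Suc r)) cs). singular_cube (Omega_top X x0) c"
        using Hc dec by metis
      have len': "length (take r cs @ [cs ! r, cs ! Suc r] @ drop (Suc (Suc r)) cs) = n"
        using len dec by metis
      have "tface phi n a (take r cs @ [cs ! r, cs ! Suc r] @ drop (Suc (Suc r)) cs) (Suc r) 1 =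
         Pn phi (n - 1) a (take r cs @ [cube_push (\<lambda>(g, h). loop_concat g h) (cube_cross (cs ! r) (cs ! Suc r))] @ drop (Suc (Suc r)) cs)"
        by (rule tface_mid[OF H Ha Hc' len' lA])
      then have "tface phi n a cs (Suc r) 1 =
         Pn phi (n - 1) a (take r cs @ [cube_push (\<lambda>(g, h). loop_concat g h) (cube_cross (cs ! r) (cs ! Suc r))] @ drop (Suc (Suc r)) cs)"
        by (simp only: dec[symmetric])
      then show ?thesis by (simp add: T_def)
    qed
    have sumsplit: "(\<Sum>j<n. frag_cmul ((-1) ^ Suc j) (T j 0 - T j 1)) =
        (\<Sum>j<n. frag_cmul ((-1) ^ Suc j) (T j 0)) - (\<Sum>j<n. frag_cmul ((-1) ^ Suc j) (T j 1))"
      by (simp add: frag_cmul_diff2 sum_subtractf)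
    have s0: "(\<Sum>j<n. frag_cmul ((-1) ^ Suc j) (T j 0)) = frag_cmul ((-1) ^ n) (T m 0)"
      using Suc T0 by (simp add: sum.lessThan_Suc)
    have s1: "(\<Sum>j<n. frag_cmul ((-1) ^ Suc j) (T j 1)) =
        - T 0 1 + (\<Sum>r<n - 1. frag_cmul ((-1) ^ r) (T (Suc r) 1))"
      unfolding Suc sum.lessThan_Suc_shift by (simp del: sum.lessThan_Suc)
    have neg: "(\<Sum>r<n - 1. frag_cmul ((-1) ^ Suc r) (T (Suc r) 1)) = - (\<Sum>r<n - 1. frag_cmul ((-1) ^ r) (T (Suc r) 1))"
      by (simp only: sum_negf[symmetric]) simp
    have s1': "(\<Sum>r<n - 1. frag_cmul ((-1) ^ Suc r) (T (Suc r) 1)) =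
       (\<Sum>r<n - 1. frag_cmul ((-1) ^ Suc r) (nd (frag_of (Pn phi (n - 1) a
            (take r cs @ [cube_push (\<lambda>(g, h). loop_concat g h) (cube_cross (cs ! r) (cs ! Suc r))] @ drop (Suc (Suc r)) cs)))))"
      using Suc by (intro sum.cong refl) (simp add: T1r)
    have S: "(\<Sum>j<n. frag_cmul ((-1) ^ Suc j) (T j 0 - T j 1)) =
       frag_cmul ((-1) ^ n) (T m 0) + T 0 1 + (\<Sum>r<n - 1. frag_cmul ((-1) ^ Suc r) (T (Suc r) 1))"
      unfolding sumsplit s0 s1 neg by (simp add: algebra_simps)
    have n1: "1 \<le> n" "n - 1 = m" using Suc by auto
    show ?thesis unfolding main S s1' T10 T0m if_P[OF n1(1)] by (rule refl)
  qed
qed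


lemma sumL1:
  fixes g :: "nat \<Rightarrow> 'b::comm_monoid_add"
  assumes "\<And>s. 3 \<le> s \<Longrightarrow> g s = 0"
  shows "(\<Sum>s=1..M. g s) = (if 1 \<le> M then g 1 else 0) + (if 2 \<le> M then g 2 else 0)"
proof (induction M)
  case 0 then show ?case by simp
next
  case (Suc M)
  have "(\<Sum>s=1..Suc M. g s) = (\<Sum>s=1..M. g s) + g (Suc M)" by simp
  then show ?case using Suc assms[of "Suc M"]
    by (cases "M = 0"; cases "M = 1") (auto simp: numeral_2_eq_2)
qed

lemma sumL2:
  fixes h :: "nat \<Rightarrow> 'b::comm_monoid_add"
  assumes "\<And>s. 1 \<le> s \<Longrightarrow> s < n \<Longrightarrow> h s = 0"
  shows "(\<Sum>s=1..Suc n. h s) = h (Suc n) + (if 1 \<le> n then h n else 0)"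
proof (cases n)
  case 0 then show ?thesis by simp
next
  case (Suc m)
  have "(\<Sum>s=1..m. h s) = 0" using assms Suc by (intro sum.neutral) auto
  then show ?thesis using Suc by (simp add: add.commute)
qed

lemma sumL3: "(\<Sum>r=1..Suc n. if r \<le> n then f r else 0) = (\<Sum>r<n. f (Suc r) :: 'b::comm_monoid_add)"
proof -
  have "(\<Sum>r=1..Suc n. if r \<le> n then f r else 0) = (\<Sum>r=1..n. if r \<le> n then f r else 0)" by simp
  also have "\<dots> = (\<Sum>r=Suc 0..n. f r)" by (intro sum.cong) auto
  also have "\<dots> = (\<Sum>r<n. f (Suc r))" by (rule sum.atLeast1_atMost_eq)
  finally show ?thesis .
qed

lemma sumL4: "(\<Sum>r=1..Suc n. if Suc r \<le> n then f r else 0) = (\<Sum>r<n - 1. f (Suc r) :: 'b::comm_monoid_add)"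
proof (cases n)
  case 0 then show ?thesis by simp
next
  case (Suc m)
  have "(\<Sum>r=1..Suc n. if Suc r \<le> n then f r else 0) = (\<Sum>r=1..Suc m. if r \<le> m then f r else 0)"
    using Suc by simp
  also have "\<dots> = (\<Sum>r<m. f (Suc r))" by (rule sumL3)
  finally show ?thesis using Suc by simp
qed

lemma degen_Pn_c': "r < length L \<Longrightarrow> L ! r = c \<Longrightarrow> degenerate_cube c \<Longrightarrow> degenerate_cube (Pn phi n a L)"
  unfolding Pn_def by (intro degen_push degen_cross_r degen_tuple[where r=r]) auto



lemma stepA:
  assumes N: "N = Suc n" and len: "length cs = n"
  shows "(\<Sum>s=1..N. frag_cmul ((-1) ^ (s * (N - s)))
            (frag_extend (\<lambda>a'. chain_phi phi (N - s + 1) (a', drop (s - 1) cs)) (chain_nu nuF s (a, take (s - 1) cs))))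
    = frag_cmul ((-1) ^ n) (nd (frag_extend (\<lambda>a'. frag_of (Pn phi n a' cs)) (rawB a)))
      + (if 1 \<le> n then nd (frag_of (Pn phi (n - 1) (cube_push (\<lambda>(a, g). nuF a g) (cube_cross a (cs ! 0))) (tl cs))) else 0)"
proof -
  let ?g = "\<lambda>s. frag_cmul ((-1) ^ (s * (N - s)))
            (frag_extend (\<lambda>a'. chain_phi phi (N - s + 1) (a', drop (s - 1) cs)) (chain_nu nuF s (a, take (s - 1) cs)))"
  have z: "?g s = 0" if "3 \<le> s" for s using that by (simp add: chain_nu_def)
  have g1: "?g 1 = frag_cmul ((-1) ^ n) (nd (frag_extend (\<lambda>a'. frag_of (Pn phi n a' cs)) (rawB a)))"
  proof -
    have "frag_extend (\<lambda>a'. chain_phi phi (N - 1 + 1) (a', drop (1 - 1) cs)) (chain_nu nuF 1 (a, take (1 - 1) cs))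
        = frag_extend (\<lambda>a'. nd (frag_of (Pn phi n a' cs))) (nd (rawB a))"
      by (simp add: chain_phi_Pn chain_nu_def cube_boundary_rawB N)
    also have "\<dots> = nd (frag_extend (\<lambda>a'. frag_of (Pn phi n a' cs)) (rawB a))"
      by (rule frag_extend_nd_of) (rule degen_Pn_a)
    finally show ?thesis using N by simp
  qed
  have g2: "?g 2 = nd (frag_of (Pn phi (n - 1) (cube_push (\<lambda>(a, g). nuF a g) (cube_cross a (cs ! 0))) (tl cs)))"
    if n1: "1 \<le> n"
  proof -
    have "take 1 cs ! 0 = cs ! 0" using n1 len by (cases cs) auto
    then have "frag_extend (\<lambda>a'. chain_phi phi (N - 2 + 1) (a', drop (2 - 1) cs)) (chain_nu nuF 2 (a, take (2 - 1) cs))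
        = frag_extend (\<lambda>a'. nd (frag_of (Pn phi (n - 1) a' (tl cs)))) (nd (frag_of (cube_push (\<lambda>(a, g). nuF a g) (cube_cross a (cs ! 0)))))"
      using n1 by (simp add: chain_phi_Pn chain_nu_def N drop_Suc)
    also have "\<dots> = nd (frag_of (Pn phi (n - 1) (cube_push (\<lambda>(a, g). nuF a g) (cube_cross a (cs ! 0))) (tl cs)))"
      by (rule frag_extend_nd_single) (rule degen_Pn_a)
    finally show ?thesis using N n1 by simp
  qed
  have c1: "1 \<le> N" and c2: "(2 \<le> N) = (1 \<le> n)" using N by auto
  have "(\<Sum>s=1..N. ?g s) = (if 1 \<le> N then ?g 1 else 0) + (if 2 \<le> N then ?g 2 else 0)"
    by (rule sumL1) (rule z)
  also have "\<dots> = ?g 1 + (if 1 \<le> n then ?g 2 else 0)" by (simp only: c1 c2 if_True)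
  finally have E: "(\<Sum>s=1..N. ?g s) = ?g 1 + (if 1 \<le> n then ?g 2 else 0)" .
  show ?thesis
  proof (cases "1 \<le> n")
    case True
    then show ?thesis using E
      by (simp only: g1 g2[OF True] if_True)
  next
    case False
    then show ?thesis using E
      by (simp only: g1 if_False)
  qed
qed


lemma stepC:
  assumes N: "N = Suc n" and len: "length cs = n"
  shows "(\<Sum>s=1..N. frag_cmul ((-1) ^ ((s + 1) * (N - s)))
            (frag_extend (\<lambda>b. chain_nu nuG (N - s + 1) (b, drop (s - 1) cs)) (chain_phi phi s (a, take (s - 1) cs))))
    = nd (rawB (Pn phi n a cs))
      + (if 1 \<le> n then frag_cmul ((-1) ^ Suc n) (nd (frag_of (cube_push (\<lambda>(b, g). nuG b g)
                   (cube_cross (Pn phi (n - 1) a (butlast cs)) (last cs))))) else 0)"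
  unfolding N
proof -
  let ?h = "\<lambda>s. frag_cmul ((-1) ^ ((s + 1) * (Suc n - s)))
            (frag_extend (\<lambda>b. chain_nu nuG (Suc n - s + 1) (b, drop (s - 1) cs)) (chain_phi phi s (a, take (s - 1) cs)))"
  have z: "?h s = 0" if "1 \<le> s" "s < n" for s
  proof -
    have "Suc n - s + 1 \<noteq> 1" "Suc n - s + 1 \<noteq> 2" using that by auto
    then show ?thesis by (simp add: chain_nu_def frag_extend_eq_0 del: Nat.add_diff_assoc2)
  qed
  have E: "(\<Sum>s=1..Suc n. ?h s) = ?h (Suc n) + (if 1 \<le> n then ?h n else 0)"
    by (rule sumL2) (rule z)
  have h1: "?h (Suc n) = nd (rawB (Pn phi n a cs))"
  proof -
    have e: "(\<lambda>b. chain_nu nuG (Suc 0) (b, xs)) = cube_boundary" for xs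
      by (simp add: chain_nu_def fun_eq_iff)
    have "take (Suc n - 1) cs = cs" using len by simp
    then show ?thesis by (simp add: e chain_phi_Pn boundary_nd_of)
  qed
  have h2: "?h n = frag_cmul ((-1) ^ Suc n) (nd (frag_of (cube_push (\<lambda>(b, g). nuG b g)
                   (cube_cross (Pn phi (n - 1) a (butlast cs)) (last cs)))))" if n1: "1 \<le> n"
  proof -
    have "cs \<noteq> []" using n1 len by auto
    then have l: "drop (n - 1) cs ! 0 = last cs" using n1 len by (simp add: last_conv_nth)
    have b: "take (n - 1) cs = butlast cs" using len by (simp add: butlast_conv_take)
    have e: "Suc n - n + 1 = 2" "(n + 1) * (Suc n - n) = Suc n" using n1 by auto
    have "frag_extend (\<lambda>b. chain_nu nuG 2 (b, drop (n - 1) cs)) (chain_phi phi n (a, take (n - 1) cs))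
       = frag_extend (\<lambda>b. nd (frag_of (cube_push (\<lambda>(b, g). nuG b g) (cube_cross b (last cs)))))
            (nd (frag_of (Pn phi (n - 1) a (butlast cs))))"
      using l b by (simp add: chain_nu_def chain_phi_Pn)
    also have "\<dots> = nd (frag_of (cube_push (\<lambda>(b, g). nuG b g) (cube_cross (Pn phi (n - 1) a (butlast cs)) (last cs))))"
      by (rule frag_extend_nd_single) (intro degen_push degen_cross_l)
    finally show ?thesis by (simp only: e)
  qed
  show "(\<Sum>s=1..Suc n. ?h s) = nd (rawB (Pn phi n a cs))
      + (if 1 \<le> n then frag_cmul ((-1) ^ Suc n) (nd (frag_of (cube_push (\<lambda>(b, g). nuG b g)
                   (cube_cross (Pn phi (n - 1) a (butlast cs)) (last cs))))) else 0)"
    using E h1 h2 by (cases "1 \<le> n") (simp_all only: if_True if_False)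
qed


lemma stepB:
  assumes N: "N = Suc n" and len: "length cs = n"
  shows "(\<Sum>r=1..N. \<Sum>s=1..N - r. frag_cmul ((-1) ^ (r + s * (N - r - s))
                                  * (-1) ^ (s * (fst a + sum_list (map fst (take (r - 1) cs)))))
            (frag_extend (\<lambda>c. chain_phi phi (r + (N - r - s) + 1) (a, take (r - 1) cs @ [c] @ drop (r - 1 + s) cs))
                         (chain_mu s (take s (drop (r - 1) cs)))))
    = frag_cmul ((-1) ^ (n + fst a)) (\<Sum>r<n. frag_cmul ((-1) ^ pfx cs r)
         (nd (frag_extend (\<lambda>c'. frag_of (Pn phi n a (cs[r := c']))) (rawB (cs ! r)))))
    + (\<Sum>r<n - 1. frag_cmul ((-1) ^ Suc r) (nd (frag_of (Pn phi (n - 1) a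
            (take r cs @ [cube_push (\<lambda>(g, h). loop_concat g h) (cube_cross (cs ! r) (cs ! Suc r))] @ drop (Suc (Suc r)) cs)))))"
  unfolding N
proof -
  define k where "k r s = frag_cmul ((-1) ^ (r + s * (Suc n - r - s))
                                  * (-1) ^ (s * (fst a + sum_list (map fst (take (r - 1) cs)))))
            (frag_extend (\<lambda>c. chain_phi phi (r + (Suc n - r - s) + 1) (a, take (r - 1) cs @ [c] @ drop (r - 1 + s) cs))
                         (chain_mu s (take s (drop (r - 1) cs))))" for r s
  have z: "k r s = 0" if "3 \<le> s" for r s using that by (simp add: k_def chain_mu_def)
  have inner: "(\<Sum>s=1..Suc n - r. k r s) = (if r \<le> n then k r 1 else 0) + (if Suc r \<le> n then k r 2 else 0)"
    if "r \<in> {1..Suc n}" for r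
  proof -
    have "(\<Sum>s=1..Suc n - r. k r s) = (if 1 \<le> Suc n - r then k r 1 else 0) + (if 2 \<le> Suc n - r then k r 2 else 0)"
      by (rule sumL1) (rule z)
    moreover have "(1 \<le> Suc n - r) = (r \<le> n)" "(2 \<le> Suc n - r) = (Suc r \<le> n)" using that by auto
    ultimately show ?thesis by simp
  qed
  have "(\<Sum>r=1..Suc n. \<Sum>s=1..Suc n - r. k r s) =
        (\<Sum>r=1..Suc n. (if r \<le> n then k r 1 else 0) + (if Suc r \<le> n then k r 2 else 0))"
    by (rule sum.cong[OF refl]) (rule inner)
  also have "\<dots> = (\<Sum>r<n. k (Suc r) 1) + (\<Sum>r<n - 1. k (Suc r) 2)"
    by (simp only: sum.distrib sumL3 sumL4)
  finally have E: "(\<Sum>r=1..Suc n. \<Sum>s=1..Suc n - r. k r s) = (\<Sum>r<n. k (Suc r) 1) + (\<Sum>r<n - 1. k (Suc r) 2)" .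
  have k1: "k (Suc r) 1 = frag_cmul ((-1) ^ (n + fst a)) (frag_cmul ((-1) ^ pfx cs r)
         (nd (frag_extend (\<lambda>c'. frag_of (Pn phi n a (cs[r := c']))) (rawB (cs ! r)))))" if r: "r < n" for r
  proof -
    have upd: "take r cs @ [c] @ drop (Suc r) cs = cs[r := c]" for c
      using r len by (simp add: upd_conv_take_nth_drop)
    have t1: "take 1 (drop r cs) ! 0 = cs ! r" using r len by simp
    have idx: "Suc r + (Suc n - Suc r - 1) + 1 = Suc n" using r by simp
    have sg: "(-1::int) ^ (Suc r + 1 * (Suc n - Suc r - 1)) * (-1) ^ (1 * (fst a + pfx cs r))
            = (-1) ^ (n + fst a) * (-1) ^ pfx cs r"
    proof -
      have "Suc r + 1 * (Suc n - Suc r - 1) = n" using r by simp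
      then show ?thesis by (simp add: power_add)
    qed
    have "frag_extend (\<lambda>c. chain_phi phi (Suc r + (Suc n - Suc r - 1) + 1) (a, take (Suc r - 1) cs @ [c] @ drop (Suc r - 1 + 1) cs))
                         (chain_mu 1 (take 1 (drop (Suc r - 1) cs)))
        = frag_extend (\<lambda>c. nd (frag_of (Pn phi n a (cs[r := c])))) (nd (rawB (cs ! r)))"
      unfolding idx using upd t1 by (simp add: chain_phi_Pn chain_mu_def cube_boundary_rawB)
    also have "\<dots> = nd (frag_extend (\<lambda>c'. frag_of (Pn phi n a (cs[r := c']))) (rawB (cs ! r)))"
      by (rule frag_extend_nd_of) (rule degen_Pn_c, use r len in auto)
    finally show ?thesis unfolding k_def by (simp only: sg diff_Suc_1 frag_cmul_cmul)
  qed
  have k2: "k (Suc r) 2 = frag_cmul ((-1) ^ Suc r) (nd (frag_of (Pn phi (n - 1) a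
            (take r cs @ [cube_push (\<lambda>(g, h). loop_concat g h) (cube_cross (cs ! r) (cs ! Suc r))] @ drop (Suc (Suc r)) cs))))"
    if r: "r < n - 1" for r
  proof -
    have t2: "take 2 (drop r cs) ! 0 = cs ! r" "take 2 (drop r cs) ! 1 = cs ! Suc r" using r len by auto
    have idx: "Suc r + (Suc n - Suc r - 2) + 1 = n" using r by simp
    have dr: "Suc r - 1 + 2 = Suc (Suc r)" by simp
    have sg: "(-1::int) ^ (Suc r + 2 * (Suc n - Suc r - 2)) * (-1) ^ (2 * (fst a + pfx cs (Suc r - 1)))
            = (-1) ^ Suc r"
      by (simp add: power_add power_mult)
    have "frag_extend (\<lambda>c. chain_phi phi (Suc r + (Suc n - Suc r - 2) + 1) (a, take (Suc r - 1) cs @ [c] @ drop (Suc r - 1 + 2) cs))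
                         (chain_mu 2 (take 2 (drop (Suc r - 1) cs)))
        = frag_extend (\<lambda>c. nd (frag_of (Pn phi (n - 1) a (take r cs @ [c] @ drop (Suc (Suc r)) cs))))
            (nd (frag_of (cube_push (\<lambda>(g, h). loop_concat g h) (cube_cross (cs ! r) (cs ! Suc r)))))"
      unfolding idx dr diff_Suc_1 using t2 by (simp add: chain_phi_Pn chain_mu_def)
    also have "\<dots> = nd (frag_of (Pn phi (n - 1) a
            (take r cs @ [cube_push (\<lambda>(g, h). loop_concat g h) (cube_cross (cs ! r) (cs ! Suc r))] @ drop (Suc (Suc r)) cs)))"
      by (rule frag_extend_nd_single) (rule degen_Pn_c'[where r=r], use r len in \<open>auto simp: nth_append\<close>)
    finally show ?thesis unfolding k_def by (simp only: sg)
  qed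
  show "(\<Sum>r=1..Suc n. \<Sum>s=1..Suc n - r. frag_cmul ((-1) ^ (r + s * (Suc n - r - s))
                                  * (-1) ^ (s * (fst a + sum_list (map fst (take (r - 1) cs)))))
            (frag_extend (\<lambda>c. chain_phi phi (r + (Suc n - r - s) + 1) (a, take (r - 1) cs @ [c] @ drop (r - 1 + s) cs))
                         (chain_mu s (take s (drop (r - 1) cs)))))
    = frag_cmul ((-1) ^ (n + fst a)) (\<Sum>r<n. frag_cmul ((-1) ^ pfx cs r)
         (nd (frag_extend (\<lambda>c'. frag_of (Pn phi n a (cs[r := c']))) (rawB (cs ! r)))))
    + (\<Sum>r<n - 1. frag_cmul ((-1) ^ Suc r) (nd (frag_of (Pn phi (n - 1) a
            (take r cs @ [cube_push (\<lambda>(g, h). loop_concat g h) (cube_cross (cs ! r) (cs ! Suc r))] @ drop (Suc (Suc r)) cs)))))"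
    using E[unfolded k_def] k1 k2
    by (simp add: frag_cmul_sum k_def)
qed


lemma final_alg:
  fixes z :: "'a::ab_group_add"
  assumes "z + z' = 0" "lhs1 = x1 + x2" "lhs2 = y1 + y2" "b = (z + x2 + y2) + x1 + y1" "rhs = b + z'"
  shows "lhs1 + lhs2 = rhs"
proof -
  have "rhs = (x1 + x2 + (y1 + y2)) + (z + z')" using assms(4,5) by (simp add: algebra_simps)
  then show ?thesis using assms(1-3) by simp
qed

lemma final_alg0:
  fixes y2 :: "'a::ab_group_add"
  assumes "y2 = 0" "lhs1 = x1 + 0" "lhs2 = y1 + y2" "b = 0 + x1 + y1" "rhs = b + 0"
  shows "lhs1 + lhs2 = rhs"
  using assms by simp

theorem proposition5p5:
  fixes X :: "'x topology" and x0 :: 'x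
    and F :: "'f topology" and nuF :: "'f \<Rightarrow> 'x loop \<Rightarrow> 'f"
    and G :: "'g topology" and nuG :: "'g \<Rightarrow> 'x loop \<Rightarrow> 'g"
    and phi :: "nat \<Rightarrow> (nat \<Rightarrow> real) \<Rightarrow> 'f \<Rightarrow> (nat \<Rightarrow> 'x loop) \<Rightarrow> 'g"
  assumes "topological_manifold X" and "x0 \<in> topspace X"
    and "right_top_module X x0 F nuF" and "right_top_module X x0 G nuG"
    and "top_ainf_morphism X x0 F nuF G nuG phi"
  shows "ainf_module_morphism fst fst fst (nondeg_cubes F) (nondeg_cubes (Omega_top X x0))
           chain_mu (chain_nu nuF) (chain_nu nuG) (chain_phi phi)"
proof -
  have H: "top_ainf_morphism X x0 F nuF G nuG phi" by (rule assms(5))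
  show ?thesis
    unfolding ainf_module_morphism_def
    apply (intro conjI allI impI ballI)
    subgoal for n a cs b
      by (auto simp: chain_phi_Pn nd_of split: if_splits)
    subgoal for N a cs
    proof -
      assume N1: "1 \<le> N" and aB: "a \<in> nondeg_cubes F" and csB: "cs \<in> lists (nondeg_cubes (Omega_top X x0))"
        and lenN: "length cs = N - 1"
      obtain n where N: "N = Suc n" using N1 by (cases N) auto
      have len: "length cs = n" using lenN N by simp
      have Ha: "singular_cube F a" using aB by (simp add: nondeg_cubes_def)
      have Hc: "\<forall>c\<in>set cs. singular_cube (Omega_top X x0) c" using csB by (auto simp: nondeg_cubes_def)
      note A = stepA[OF N len, where phi=phi and nuF=nuF and a=a]
      note B = stepB[OF N len, where phi=phi and a=a]
      note C = stepC[OF N len, where phi=phi and nuG=nuG and a=a]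
      note D = boundary_Pn[OF H Ha Hc len]
      show ?thesis
      proof (cases "1 \<le> n")
        case True
        note A' = A[unfolded if_P[OF True]]
        note C' = C[unfolded if_P[OF True]]
        note D' = D[unfolded if_P[OF True]]
        show ?thesis
          by (rule final_alg[OF _ A' B D' C']) (simp add: frag_cmul_distrib[symmetric])
      next
        case False
        then have n0: "n = 0" by simp
        note A' = A[unfolded if_not_P[OF False]]
        note C' = C[unfolded if_not_P[OF False]]
        note D' = D[unfolded if_not_P[OF False]]
        have y2: "(\<Sum>r<n - 1. frag_cmul ((-1) ^ Suc r) (nd (frag_of (Pn phi (n - 1) a
            (take r cs @ [cube_push (\<lambda>(g, h). loop_concat g h) (cube_cross (cs ! r) (cs ! Suc r))] @ drop (Suc (Suc r)) cs))))) = 0"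
          using n0 by simp
        show ?thesis
          by (rule final_alg0[OF y2 A' B D' C'])
      qed
    qed
    done
qed

end
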